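(* Let $\alpha,\beta,\gamma\in\Bbbk^n$ with $\beta_i\neq0$ for all $i\in Q_0$. Then $\mathcal H(\alpha,\beta,\gamma)$ is a piecewise domain with respect to the idempotents $e_0,\dots,e_{n-1}$.
   Context: $\Bbbk$ is an algebraically closed field of characteristic zero. Fix $n\ge1$; indices mod $n$, $Q_0=\{0,\dots,n-1\}$. $Q$ is the quiver with vertices $Q_0$ and arrows $u_i:i\to i+1$, $d_i:i+1\to i$; paths are written left to right, $e_i$ is the trivial path at $i$. For $\alpha,\beta,\gamma\in\Bbbk^n$, $\mathcal H(\alpha,\beta,\gamma)$ is $\Bbbk Q$ modulo the relations $d_{i-1}u_{i-1}u_i=\alpha_iu_id_iu_i+\beta_iu_iu_{i+1}d_{i+1}+\gamma_iu_i$ and $d_id_{i-1}u_{i-1}=\alpha_id_iu_id_i+\beta_iu_{i+1}d_{i+1}d_i+\gamma_id_i$ for all $i\in Q_0$. A ring $S$ with complete set of orthogonal idempotents $e_0,\dots,e_{n-1}$ is a piecewise domain if $ab=0$ implies $a=0$ or $b=0$ whenever $a\in e_iSe_k$, $b\in e_kSe_j$. *)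

theory Defs
  imports "HOL-Computational_Algebra.Polynomial"
begin

text \<open>The quiver Q: vertices 0..n-1, arrows U i : i -> i+1, D i : i+1 -> i (indices mod n).\<close>
datatype arr = U nat | D nat

fun arr_idx :: "arr \<Rightarrow> nat" where
  "arr_idx (U i) = i" | "arr_idx (D i) = i"

fun arr_src :: "nat \<Rightarrow> arr \<Rightarrow> nat" where
  "arr_src n (U i) = i" | "arr_src n (D i) = (i + 1) mod n"

fun arr_tgt :: "nat \<Rightarrow> arr \<Rightarrow> nat" where
  "arr_tgt n (U i) = (i + 1) mod n" | "arr_tgt n (D i) = i"

text \<open>A path is a start vertex with a list of arrows, composed left to right;
  (v, []) is the trivial path e_v.\<close>
type_synonym path = "nat \<times> arr list"

fun valid_from :: "nat \<Rightarrow> nat \<Rightarrow> arr list \<Rightarrow> bool" where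
  "valid_from n v [] = True"
| "valid_from n v (a # as) = (arr_idx a < n \<and> arr_src n a = v \<and> valid_from n (arr_tgt n a) as)"

fun path_tgt :: "nat \<Rightarrow> nat \<Rightarrow> arr list \<Rightarrow> nat" where
  "path_tgt n v [] = v"
| "path_tgt n v (a # as) = path_tgt n (arr_tgt n a) as"

definition path_ok :: "nat \<Rightarrow> path \<Rightarrow> bool" where
  "path_ok n p = (fst p < n \<and> valid_from n (fst p) (snd p))"

definition pathalg :: "nat \<Rightarrow> (path \<Rightarrow> 'k::field) set" where
  "pathalg n = {x. finite {p. x p \<noteq> 0} \<and> (\<forall>p. x p \<noteq> 0 \<longrightarrow> path_ok n p)}"

definition pth :: "path \<Rightarrow> path \<Rightarrow> 'k::field" where
  "pth p = (\<lambda>q. if q = p then 1 else 0)"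

text \<open>Multiplication in kQ (concatenation of paths, zero if not composable).\<close>
definition pmult :: "nat \<Rightarrow> (path \<Rightarrow> 'k::field) \<Rightarrow> (path \<Rightarrow> 'k) \<Rightarrow> path \<Rightarrow> 'k" where
  "pmult n x y = (\<lambda>(v, cs). \<Sum>k\<in>{0..length cs}.
      x (v, take k cs) * y (path_tgt n v (take k cs), drop k cs))"

definition mdec :: "nat \<Rightarrow> nat \<Rightarrow> nat" where "mdec n i = (i + n - 1) mod n"
definition minc :: "nat \<Rightarrow> nat \<Rightarrow> nat" where "minc n i = (i + 1) mod n"

definition rel1 :: "nat \<Rightarrow> (nat \<Rightarrow> 'k::field) \<Rightarrow> (nat \<Rightarrow> 'k) \<Rightarrow> (nat \<Rightarrow> 'k) \<Rightarrow> nat \<Rightarrow> path \<Rightarrow> 'k" where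
  "rel1 n \<alpha> \<beta> \<gamma> i = (\<lambda>p.
      pth (i, [D (mdec n i), U (mdec n i), U i]) p
    - \<alpha> i * pth (i, [U i, D i, U i]) p
    - \<beta> i * pth (i, [U i, U (minc n i), D (minc n i)]) p
    - \<gamma> i * pth (i, [U i]) p)"

definition rel2 :: "nat \<Rightarrow> (nat \<Rightarrow> 'k::field) \<Rightarrow> (nat \<Rightarrow> 'k) \<Rightarrow> (nat \<Rightarrow> 'k) \<Rightarrow> nat \<Rightarrow> path \<Rightarrow> 'k" where
  "rel2 n \<alpha> \<beta> \<gamma> i = (\<lambda>p.
      pth (minc n i, [D i, D (mdec n i), U (mdec n i)]) p
    - \<alpha> i * pth (minc n i, [D i, U i, D i]) p
    - \<beta> i * pth (minc n i, [U (minc n i), D (minc n i), D i]) p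
    - \<gamma> i * pth (minc n i, [D i]) p)"

inductive_set relideal :: "nat \<Rightarrow> (nat \<Rightarrow> 'k::field) \<Rightarrow> (nat \<Rightarrow> 'k) \<Rightarrow> (nat \<Rightarrow> 'k) \<Rightarrow> (path \<Rightarrow> 'k) set"
  for n \<alpha> \<beta> \<gamma> where
  zero: "(\<lambda>_. 0) \<in> relideal n \<alpha> \<beta> \<gamma>"
| step: "\<lbrakk>x \<in> relideal n \<alpha> \<beta> \<gamma>; i < n; path_ok n p; path_ok n q;
          r = rel1 n \<alpha> \<beta> \<gamma> i \<or> r = rel2 n \<alpha> \<beta> \<gamma> i\<rbrakk>
         \<Longrightarrow> (\<lambda>t. x t + c * pmult n (pmult n (pth p) r) (pth q) t) \<in> relideal n \<alpha> \<beta> \<gamma>"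

definition corner :: "nat \<Rightarrow> nat \<Rightarrow> nat \<Rightarrow> (path \<Rightarrow> 'k::field) set" where
  "corner n i k = {x \<in> pathalg n. \<forall>p. x p \<noteq> 0 \<longrightarrow> fst p = i \<and> path_tgt n (fst p) (snd p) = k}"

text \<open>H(alpha,beta,gamma) = kQ / relideal is a piecewise domain w.r.t. e_0..e_{n-1}:
  for a in e_i H e_k, b in e_k H e_j, ab = 0 implies a = 0 or b = 0.
  Written on representatives in kQ (every element of e_i H e_k lifts to corner n i k).\<close>
definition piecewise_domain_H :: "nat \<Rightarrow> (nat \<Rightarrow> 'k::field) \<Rightarrow> (nat \<Rightarrow> 'k) \<Rightarrow> (nat \<Rightarrow> 'k) \<Rightarrow> bool" where
  "piecewise_domain_H n \<alpha> \<beta> \<gamma> = (\<forall>i<n. \<forall>k<n. \<forall>j<n. \<forall>a \<in> corner n i k. \<forall>b \<in> corner n k j.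
      pmult n a b \<in> relideal n \<alpha> \<beta> \<gamma> \<longrightarrow> a \<in> relideal n \<alpha> \<beta> \<gamma> \<or> b \<in> relideal n \<alpha> \<beta> \<gamma>)"

end

theory Submission
  imports Defs "HOL-Library.Function_Algebras"
begin

lemma path_tgt_append: "path_tgt n v (xs @ ys) = path_tgt n (path_tgt n v xs) ys"
  by (induction xs arbitrary: v) auto

lemma valid_from_append: "valid_from n v (xs @ ys) = (valid_from n v xs \<and> valid_from n (path_tgt n v xs) ys)"
  by (induction xs arbitrary: v) auto

lemma pth_mult_pth:
  "pmult n (pth p) (pth q) = (if fst q = path_tgt n (fst p) (snd p) then pth (fst p, snd p @ snd q) else (\<lambda>_. 0::'k::field))"
proof (rule ext)
  fix t :: path
  obtain v cs where t: "t = (v, cs)" by fastforce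
  obtain a as where p: "p = (a, as)" by fastforce
  obtain b bs where q: "q = (b, bs)" by fastforce
  define c where "c = (if v = a \<and> take (length as) cs = as \<and> path_tgt n v as = b \<and> drop (length as) cs = bs then 1 else (0::'k))"
  have hterm: "(if (v, take k cs) = (a, as) then 1 else 0) * (if (path_tgt n v (take k cs), drop k cs) = (b, bs) then 1 else 0)
      = (if k = length as then c else (0::'k))" if "k \<le> length cs" for k
  proof (cases "k = length as")
    case True then show ?thesis unfolding c_def by auto
  next
    case False
    then have "take k cs \<noteq> as" using that by auto
    then show ?thesis using False by simp
  qed
  have "pmult n (pth p) (pth q) t = (\<Sum>k\<in>{0..length cs}. (if k = length as then c else 0))"
    unfolding pmult_def t p q pth_def
    apply (simp only: prod.case) apply (rule sum.cong[OF refl]) using hterm by simp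
  also have "\<dots> = (if length as \<le> length cs then c else 0)"
    by (simp add: sum.delta')
  also have "\<dots> = (if fst q = path_tgt n (fst p) (snd p) then pth (fst p, snd p @ snd q) t else 0)"
    unfolding t p q pth_def c_def apply auto
    by (metis append_take_drop_id)
  finally show "pmult n (pth p) (pth q) t = (if fst q = path_tgt n (fst p) (snd p) then pth (fst p, snd p @ snd q) else (\<lambda>_. 0::'k)) t"
    by (simp split: if_splits)
qed

lemma pmult_assoc: "pmult n (pmult n x y) z = pmult n x (pmult n y z)"
proof (rule ext)
  fix t :: path
  obtain v cs where t: "t = (v, cs)" by fastforce
  define L where "L = length cs"
  define g where "g = (\<lambda>j k. x (v, take j cs) * y (path_tgt n v (take j cs), take (k - j) (drop j cs))
        * z (path_tgt n v (take k cs), drop k cs))"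
  have "pmult n (pmult n x y) z t = (\<Sum>k\<in>{0..L}. \<Sum>j\<in>{0..k}. g j k)"
    unfolding pmult_def t L_def g_def
    apply (simp add: sum_distrib_right take_drop) done


  also have "\<dots> = (\<Sum>(j,i)\<in>{(j,i). j + i \<le> L}. g j (j + i))"
    using sum.triangle_reindex_eq[of "\<lambda>j i. g j (j + i)" L]
    by (simp add: atLeast0AtMost)
  also have "\<dots> = (\<Sum>j\<in>{0..L}. \<Sum>i\<in>{0..L - j}. g j (j + i))"
  proof -
    have "{(j,i). j + i \<le> L} = Sigma {0..L} (\<lambda>j. {0..L - j})" by auto
    then show ?thesis by (simp add: sum.Sigma)
  qed
  also have "\<dots> = pmult n x (pmult n y z) t"
    unfolding pmult_def t L_def g_def
    apply (simp add: sum_distrib_left)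
    apply (rule sum.cong[OF refl])
    apply (rule sum.cong[OF refl])
    by (auto simp: path_tgt_append[symmetric] take_add drop_drop add.commute mult.assoc)
  finally show "pmult n (pmult n x y) z t = pmult n x (pmult n y z) t" .
qed

definition sc :: "'k::field \<Rightarrow> (path \<Rightarrow> 'k) \<Rightarrow> path \<Rightarrow> 'k" where
  "sc c x = (\<lambda>t. c * x t)"

lemma sc_apply[simp]: "sc c x t = c * x t" by (simp add: sc_def)

lemma pmult_add_left: "pmult n (x + y) z = pmult n x z + pmult n y z"
  by (rule ext) (simp add: pmult_def split_beta distrib_right sum.distrib)
lemma pmult_add_right: "pmult n z (x + y) = pmult n z x + pmult n z y"
  by (rule ext) (simp add: pmult_def split_beta distrib_left sum.distrib)
lemma pmult_diff_left: "pmult n (x - y) z = pmult n x z - pmult n y z"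
  by (rule ext) (simp add: pmult_def split_beta left_diff_distrib sum_subtractf)
lemma pmult_diff_right: "pmult n z (x - y) = pmult n z x - pmult n z y"
  by (rule ext) (simp add: pmult_def split_beta right_diff_distrib sum_subtractf)
lemma pmult_sc_left: "pmult n (sc c x) z = sc c (pmult n x z)"
  by (rule ext) (simp add: pmult_def split_beta sum_distrib_left mult.assoc)
lemma pmult_sc_right: "pmult n z (sc c x) = sc c (pmult n z x)"
  by (rule ext) (simp add: pmult_def split_beta sum_distrib_left mult.assoc mult.left_commute)
lemma pmult_zero_left[simp]: "pmult n 0 z = 0"
  by (rule ext) (simp add: pmult_def split_beta)
lemma pmult_zero_right[simp]: "pmult n z 0 = 0"
  by (rule ext) (simp add: pmult_def split_beta)
lemma pmult_zero_left'[simp]: "pmult n (\<lambda>_. 0) z = 0"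
  by (rule ext) (simp add: pmult_def split_beta)
lemma pmult_zero_right'[simp]: "pmult n z (\<lambda>_. 0) = 0"
  by (rule ext) (simp add: pmult_def split_beta)
lemma pmult_sum_left: "pmult n (sum f J) z = (\<Sum>j\<in>J. pmult n (f j) z)"
  by (induction J rule: infinite_finite_induct) (simp_all add: pmult_add_left del: plus_fun_apply)
lemma pmult_sum_right: "pmult n z (sum f J) = (\<Sum>j\<in>J. pmult n z (f j))"
  by (induction J rule: infinite_finite_induct) (simp_all add: pmult_add_right del: plus_fun_apply)

lemma sc_add: "sc c (x + y) = sc c x + sc c y" by (rule ext) (simp add: distrib_left)
lemma sc_sc: "sc c (sc d x) = sc (c * d) x" by (rule ext) simp
lemma sc_1[simp]: "sc 1 x = x" by (rule ext) simp
lemma sc_0[simp]: "sc 0 x = 0" by (rule ext) simp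
lemma sc_zero[simp]: "sc c 0 = 0" by (rule ext) simp
lemma sc_zero'[simp]: "sc c (\<lambda>_. 0) = (\<lambda>_. 0)" by (rule ext) simp
lemma sc_sum: "sc c (sum f J) = (\<Sum>j\<in>J. sc c (f j))"
  by (induction J rule: infinite_finite_induct) (simp_all add: sc_add del: plus_fun_apply sc_apply)

lemma sum_fun_apply[simp]: "(sum f A) t = (\<Sum>a\<in>A. f a t)"
  by (induction A rule: infinite_finite_induct) auto

abbreviation I where "I n \<alpha> \<beta> \<gamma> \<equiv> relideal n \<alpha> \<beta> \<gamma>"

lemma zero_fun_lam: "(\<lambda>_. 0) = (0 :: 'a \<Rightarrow> 'b::zero)" by (simp add: fun_eq_iff)

lemma I_zero[simp]: "0 \<in> relideal n \<alpha> \<beta> \<gamma>"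
  using relideal.zero by (metis zero_fun_lam)
lemma I_zero'[simp]: "(\<lambda>_. 0) \<in> relideal n \<alpha> \<beta> \<gamma>"
  using relideal.zero by metis

lemma I_add: assumes "x \<in> relideal n \<alpha> \<beta> \<gamma>" "y \<in> relideal n \<alpha> \<beta> \<gamma>" shows "x + y \<in> relideal n \<alpha> \<beta> \<gamma>"
  using assms(2)
proof induction
  case zero then show ?case using assms(1) by (simp add: plus_fun_def)
next
  case (step y i p q r c)
  have "x + (\<lambda>t. y t + c * pmult n (pmult n (pth p) r) (pth q) t) = (\<lambda>t. (x + y) t + c * pmult n (pmult n (pth p) r) (pth q) t)"
    by (auto simp: plus_fun_def add.assoc)
  then show ?case using relideal.step[OF step.IH step.hyps(2-5)] by simp
qed

lemma I_sc: assumes "x \<in> relideal n \<alpha> \<beta> \<gamma>" shows "sc c x \<in> relideal n \<alpha> \<beta> \<gamma>"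
  using assms
proof induction
  case zero then show ?case using I_zero by (metis sc_zero zero_fun_lam)
next
  case (step y i p q r d)
  have "sc c (\<lambda>t. y t + d * pmult n (pmult n (pth p) r) (pth q) t) = (\<lambda>t. (sc c y) t + (c * d) * pmult n (pmult n (pth p) r) (pth q) t)"
    by (auto simp: distrib_left mult.assoc)
  then show ?case using relideal.step[OF step.IH step.hyps(2-5)] by simp
qed

lemma I_uminus: "x \<in> relideal n \<alpha> \<beta> \<gamma> \<Longrightarrow> - x \<in> relideal n \<alpha> \<beta> \<gamma>"
  using I_sc[of x n \<alpha> \<beta> \<gamma> "-1"] by (simp add: sc_def fun_Compl_def)

lemma I_diff: "x \<in> relideal n \<alpha> \<beta> \<gamma> \<Longrightarrow> y \<in> relideal n \<alpha> \<beta> \<gamma> \<Longrightarrow> x - y \<in> relideal n \<alpha> \<beta> \<gamma>"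
  using I_add[OF _ I_uminus] by (metis diff_conv_add_uminus)

lemma I_sum: "(\<And>j. j \<in> J \<Longrightarrow> f j \<in> relideal n \<alpha> \<beta> \<gamma>) \<Longrightarrow> sum f J \<in> relideal n \<alpha> \<beta> \<gamma>"
  by (induction J rule: infinite_finite_induct) (simp_all add: I_add)

lemma I_gen: assumes "i < n" "path_ok n p" "path_ok n q" "r = rel1 n \<alpha> \<beta> \<gamma> i \<or> r = rel2 n \<alpha> \<beta> \<gamma> i"
  shows "pmult n (pmult n (pth p) r) (pth q) \<in> relideal n \<alpha> \<beta> \<gamma>"
  using relideal.step[OF relideal.zero assms, of 1] by simp

lemma path_ok_append: "path_ok n p \<Longrightarrow> path_ok n q \<Longrightarrow> fst q = path_tgt n (fst p) (snd p) \<Longrightarrow> path_ok n (fst p, snd p @ snd q)"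
  by (auto simp: path_ok_def valid_from_append)

lemma I_mult_pth_right: assumes "x \<in> relideal n \<alpha> \<beta> \<gamma>" "path_ok n s" shows "pmult n x (pth s) \<in> relideal n \<alpha> \<beta> \<gamma>"
  using assms(1)
proof induction
  case zero then show ?case by simp
next
  case (step y i p q r c)
  have e: "(\<lambda>t. y t + c * pmult n (pmult n (pth p) r) (pth q) t) = y + sc c (pmult n (pmult n (pth p) r) (pth q))"
    by (auto simp: plus_fun_def)
  have "pmult n (pmult n (pmult n (pth p) r) (pth q)) (pth s) \<in> relideal n \<alpha> \<beta> \<gamma>"
  proof (cases "fst s = path_tgt n (fst q) (snd q)")
    case True
    then show ?thesis unfolding pmult_assoc[of n "pmult n (pth p) r"] pth_mult_pth
      using I_gen[OF step.hyps(2,3) path_ok_append[OF step.hyps(4) assms(2)] step.hyps(5)] by simp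
  qed (simp add: pmult_assoc pth_mult_pth)
  then show ?case unfolding e pmult_add_left pmult_sc_left using I_add[OF step.IH I_sc] by blast
qed

lemma I_mult_pth_left: assumes "x \<in> relideal n \<alpha> \<beta> \<gamma>" "path_ok n s" shows "pmult n (pth s) x \<in> relideal n \<alpha> \<beta> \<gamma>"
  using assms(1)
proof induction
  case zero then show ?case by simp
next
  case (step y i p q r c)
  have e: "(\<lambda>t. y t + c * pmult n (pmult n (pth p) r) (pth q) t) = y + sc c (pmult n (pmult n (pth p) r) (pth q))"
    by (auto simp: plus_fun_def)
  have "pmult n (pth s) (pmult n (pmult n (pth p) r) (pth q)) \<in> relideal n \<alpha> \<beta> \<gamma>"
  proof (cases "fst p = path_tgt n (fst s) (snd s)")
    case True
    then show ?thesis unfolding pmult_assoc[symmetric] pth_mult_pth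
      using I_gen[OF step.hyps(2) path_ok_append[OF assms(2) step.hyps(3)] step.hyps(4,5)] by simp
  qed (simp add: pmult_assoc[symmetric] pth_mult_pth)
  then show ?case unfolding e pmult_add_right pmult_sc_right using I_add[OF step.IH I_sc] by blast
qed

lemma pathalg_expand: assumes "x \<in> pathalg n"
  shows "x = (\<Sum>p\<in>{p. x p \<noteq> 0}. sc (x p) (pth p))"
proof (rule ext)
  fix t
  have fin: "finite {p. x p \<noteq> 0}" using assms by (simp add: pathalg_def)
  have "(\<Sum>p\<in>{p. x p \<noteq> 0}. sc (x p) (pth p)) t = (\<Sum>p\<in>{p. x p \<noteq> 0}. x p * pth p t)"
    by simp
  also have "\<dots> = (\<Sum>p\<in>{p. x p \<noteq> 0}. if t = p then x t else 0)"
    by (intro sum.cong) (auto simp: pth_def)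
  also have "\<dots> = x t" using fin by (simp add: sum.delta)
  finally show "x t = (\<Sum>p\<in>{p. x p \<noteq> 0}. sc (x p) (pth p)) t" by simp
qed

lemma I_mult_right: assumes "x \<in> relideal n \<alpha> \<beta> \<gamma>" "y \<in> pathalg n" shows "pmult n x y \<in> relideal n \<alpha> \<beta> \<gamma>"
proof -
  have ok: "path_ok n p" if "y p \<noteq> 0" for p using assms(2) that unfolding pathalg_def by blast
  show ?thesis
    apply (subst pathalg_expand[OF assms(2)])
    unfolding pmult_sum_right pmult_sc_right
    using I_sum I_sc I_mult_pth_right[OF assms(1) ok] by (metis (mono_tags, lifting) mem_Collect_eq)
qed

lemma I_mult_left: assumes "x \<in> relideal n \<alpha> \<beta> \<gamma>" "y \<in> pathalg n" shows "pmult n y x \<in> relideal n \<alpha> \<beta> \<gamma>"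
proof -
  have ok: "path_ok n p" if "y p \<noteq> 0" for p using assms(2) that unfolding pathalg_def by blast
  show ?thesis
    apply (subst pathalg_expand[OF assms(2)])
    unfolding pmult_sum_left pmult_sc_left
    using I_sum I_sc I_mult_pth_left[OF assms(1) ok] by (metis (mono_tags, lifting) mem_Collect_eq)
qed

type_synonym 'k bp = "'k poly poly"

definition cst :: "'k::field \<Rightarrow> 'k bp" where "cst a = [:[:a:]:]"
definition Xp :: "'k::field bp" where "Xp = [:[:0, 1:]:]"
definition Yp :: "'k::field bp" where "Yp = [:0, 1:]"

lemma cst_add: "cst (a + b) = cst a + cst b" by (simp add: cst_def)
lemma cst_mult: "cst (a * b) = cst a * cst b" by (simp add: cst_def)
lemma cst_0[simp]: "cst 0 = 0" by (simp add: cst_def)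
lemma cst_1[simp]: "cst 1 = 1" by (simp add: cst_def one_pCons)
lemma cst_diff: "cst (a - b) = cst a - cst b" by (simp add: cst_def)
lemma cst_uminus: "cst (- a) = - cst a" by (simp add: cst_def)
lemma cst_inj[simp]: "cst a = cst b \<longleftrightarrow> a = b" by (simp add: cst_def)
lemma cst_eq_0[simp]: "cst a = 0 \<longleftrightarrow> a = 0" by (simp add: cst_def)

lemma map_poly_add_hom:
  assumes "h 0 = 0" "\<And>a b. h (a + b) = h a + h b"
  shows "map_poly h (p + q) = map_poly h p + map_poly h q"
  by (rule poly_eqI) (simp add: coeff_map_poly assms)

lemma hom_sum: assumes "h 0 = 0" "\<And>a b. h (a + b) = h a + h b"
  shows "h (sum f A) = (\<Sum>x\<in>A. h (f x))"
  by (induction A rule: infinite_finite_induct) (simp_all add: assms)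

lemma map_poly_mult_hom:
  fixes h :: "'a::comm_semiring_0 \<Rightarrow> 'b::comm_semiring_0"
  assumes "h 0 = 0" "\<And>a b. h (a + b) = h a + h b" "\<And>a b. h (a * b) = h a * h b"
  shows "map_poly h (p * q) = map_poly h p * map_poly h q"
  by (rule poly_eqI) (simp add: coeff_map_poly assms coeff_mult hom_sum[of h, OF assms(1,2)])

definition hc :: "'k::field bp \<Rightarrow> 'k poly \<Rightarrow> 'k bp" where
  "hc P c = poly (map_poly cst c) P"

lemma hc_0[simp]: "hc P 0 = 0" by (simp add: hc_def)
lemma hc_add: "hc P (a + b) = hc P a + hc P b"
  by (simp add: hc_def map_poly_add_hom cst_add)
lemma hc_mult: "hc P (a * b) = hc P a * hc P b"
  by (simp add: hc_def map_poly_mult_hom cst_add cst_mult)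
lemma hc_const[simp]: "hc P [:a:] = cst a" by (simp add: hc_def map_poly_pCons)
lemma hc_X[simp]: "hc P [:0, 1:] = P" by (simp add: hc_def map_poly_pCons cst_def one_pCons[symmetric])
lemma hc_1[simp]: "hc P 1 = 1" by (simp add: hc_def one_pCons map_poly_pCons cst_def)

definition evB :: "'k::field bp \<Rightarrow> 'k bp \<Rightarrow> 'k bp \<Rightarrow> 'k bp" where
  "evB P Q f = poly (map_poly (hc P) f) Q"

lemma evB_0[simp]: "evB P Q 0 = 0" by (simp add: evB_def)
lemma evB_add: "evB P Q (a + b) = evB P Q a + evB P Q b"
  by (simp add: evB_def map_poly_add_hom hc_add)
lemma evB_mult: "evB P Q (a * b) = evB P Q a * evB P Q b"
  by (simp add: evB_def map_poly_mult_hom hc_add hc_mult)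
lemma evB_cst[simp]: "evB P Q (cst a) = cst a" by (simp add: evB_def cst_def map_poly_pCons)
lemma evB_X[simp]: "evB P Q Xp = P" by (simp add: evB_def Xp_def map_poly_pCons)
lemma evB_Y[simp]: "evB P Q Yp = Q" by (simp add: evB_def Yp_def map_poly_pCons one_pCons) (simp add: one_pCons[symmetric])
lemma evB_1[simp]: "evB P Q 1 = 1" using evB_cst[of P Q 1] by simp
lemma evB_uminus: "evB P Q (- a) = - evB P Q a"
  using evB_add[of P Q a "-a"] by (simp add: eq_neg_iff_add_eq_0 add.commute)
lemma evB_diff: "evB P Q (a - b) = evB P Q a - evB P Q b"
  using evB_add[of P Q a "-b"] by (simp add: evB_uminus)
lemma evB_sum: "evB P Q (sum f A) = (\<Sum>x\<in>A. evB P Q (f x))"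
  by (rule hom_sum) (simp_all add: evB_add)
lemma evB_power: "evB P Q (a ^ k) = evB P Q a ^ k"
  by (induction k) (simp_all add: evB_mult)

definition coeff2 :: "'k::field bp \<Rightarrow> nat \<Rightarrow> nat \<Rightarrow> 'k" where
  "coeff2 f a b = coeff (coeff f b) a"

definition supp2 :: "'k::field bp \<Rightarrow> (nat \<times> nat) set" where
  "supp2 f = {(a, b). coeff2 f a b \<noteq> 0}"

lemma finite_supp2: "finite (supp2 f)"
proof -
  define N where "N = Max (insert (degree f) ((\<lambda>j. degree (coeff f j)) ` {..degree f}))"
  have "supp2 f \<subseteq> {..N} \<times> {..N}"
  proof
    fix x assume "x \<in> supp2 f"
    then obtain a b where x: "x = (a, b)" and c: "coeff (coeff f b) a \<noteq> 0"
      by (auto simp: supp2_def coeff2_def)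
    then have b: "b \<le> degree f" by (metis coeff_0 le_degree)
    have "a \<le> degree (coeff f b)" using c by (simp add: le_degree)
    also have "\<dots> \<le> N" unfolding N_def using b by (intro Max_ge) auto
    finally have "a \<le> N" .
    moreover have "b \<le> N" unfolding N_def using b by (intro le_trans[OF b] Max_ge) auto
    ultimately show "x \<in> {..N} \<times> {..N}" using x by auto
  qed
  then show ?thesis by (rule finite_subset) auto
qed

lemma monom_pow: "monom (x::'a::comm_semiring_1) m ^ k = monom (x^k) (m*k)"
  by (induction k) (simp_all add: mult_monom monom_0 one_pCons)

lemma mono2: "cst c * Xp ^ a * Yp ^ b = monom (monom c a) b"
proof -
  have X: "Xp = monom (monom (1::'a) 1) 0" by (simp add: Xp_def monom_0 monom_Suc)
  have Y: "Yp = monom (1::'a poly) 1" by (simp add: Yp_def monom_Suc monom_0 one_pCons)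
  have C: "cst c = monom (monom c 0) 0" by (simp add: cst_def monom_0)
  show ?thesis unfolding X Y C monom_pow mult_monom by (simp add: mult_monom)
qed

lemma coeff2_sum_monos: assumes "finite S"
  shows "coeff2 (\<Sum>(a,b)\<in>S. cst (c a b) * Xp ^ a * Yp ^ b) a0 b0 = (if (a0, b0) \<in> S then c a0 b0 else 0)"
proof -
  have "coeff2 (\<Sum>(a,b)\<in>S. cst (c a b) * Xp ^ a * Yp ^ b) a0 b0 = (\<Sum>x\<in>S. if x = (a0, b0) then c a0 b0 else 0)"
    unfolding coeff2_def mono2 coeff_sum split_beta
    by (intro sum.cong) (auto simp: coeff_monom)
  also have "\<dots> = (if (a0, b0) \<in> S then c a0 b0 else 0)"
    using assms by (simp add: sum.delta')
  finally show ?thesis .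
qed

lemma coeff2_eqI: "(\<And>a b. coeff2 f a b = coeff2 g a b) \<Longrightarrow> f = g"
  unfolding coeff2_def by (metis poly_eqI)

lemma bp_expand: assumes "finite S" "supp2 f \<subseteq> S"
  shows "f = (\<Sum>(a,b)\<in>S. cst (coeff2 f a b) * Xp ^ a * Yp ^ b)"
  by (rule coeff2_eqI) (use assms in \<open>auto simp: coeff2_sum_monos supp2_def\<close>)

lemma bp_induct:
  assumes "\<And>a. P (cst a)" "P Xp" "P Yp" "\<And>f g. P f \<Longrightarrow> P g \<Longrightarrow> P (f + g)" "\<And>f g. P f \<Longrightarrow> P g \<Longrightarrow> P (f * g)"
  shows "P f"
proof -
  have P0: "P 0" using assms(1)[of 0] by simp
  have P1: "P 1" using assms(1)[of 1] by simp
  have pw: "P (g ^ k)" if "P g" for g k using that by (induction k) (simp_all add: P1 assms(5))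
  have sm: "P (sum h A)" if "\<And>x. x \<in> A \<Longrightarrow> P (h x)" for h and A :: "(nat \<times> nat) set"
    using that by (induction A rule: infinite_finite_induct) (simp_all add: P0 assms(4))
  show ?thesis
    apply (subst bp_expand[OF finite_supp2 order_refl])
    apply (rule sm)
    using assms(1-3,5) pw by (auto simp: split_beta)
qed

lemma hom_eq:
  assumes "\<And>a b. h1 (a + b) = h1 a + h1 b" "\<And>a b. h1 (a * b) = h1 a * h1 b"
    "\<And>a b. h2 (a + b) = h2 a + h2 b" "\<And>a b. h2 (a * b) = h2 a * h2 b"
    "\<And>a. h1 (cst a) = h2 (cst a)" "h1 Xp = h2 Xp" "h1 Yp = h2 Yp"
  shows "h1 f = (h2 f :: 'k::field bp)"
  by (rule bp_induct[where P="\<lambda>f. h1 f = h2 f"]) (simp_all add: assms)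

lemma evB_XY: "evB Xp Yp f = f"
  using hom_eq[of "evB Xp Yp" id] by (simp add: evB_add evB_mult)

lemma evB_evB: "evB P Q (evB P' Q' f) = evB (evB P Q P') (evB P Q Q') f"
  by (rule hom_eq) (simp_all add: evB_add evB_mult)

definition sig :: "(nat \<Rightarrow> 'k::field) \<Rightarrow> (nat \<Rightarrow> 'k) \<Rightarrow> (nat \<Rightarrow> 'k) \<Rightarrow> nat \<Rightarrow> 'k bp \<Rightarrow> 'k bp" where
  "sig \<alpha> \<beta> \<gamma> i = evB Yp (cst (\<alpha> i) * Yp + cst (\<beta> i) * Xp + cst (\<gamma> i))"

definition sigi :: "(nat \<Rightarrow> 'k::field) \<Rightarrow> (nat \<Rightarrow> 'k) \<Rightarrow> (nat \<Rightarrow> 'k) \<Rightarrow> nat \<Rightarrow> 'k bp \<Rightarrow> 'k bp" where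
  "sigi \<alpha> \<beta> \<gamma> i = evB (cst (inverse (\<beta> i)) * (Yp - cst (\<alpha> i) * Xp - cst (\<gamma> i))) Xp"

lemma sig_sigi: assumes "\<beta> i \<noteq> 0" shows "sig \<alpha> \<beta> \<gamma> i (sigi \<alpha> \<beta> \<gamma> i f) = f"
proof -
  have "cst (inverse (\<beta> i)) * cst (\<beta> i) = 1" using assms by (simp flip: cst_mult)
  then have h: "cst (inverse (\<beta> i)) * (cst (\<beta> i) * Xp) = Xp"
    by (metis mult.assoc mult_1)
  have e1: "evB Yp (cst (\<alpha> i) * Yp + cst (\<beta> i) * Xp + cst (\<gamma> i)) (cst (inverse (\<beta> i)) * (Yp - cst (\<alpha> i) * Xp - cst (\<gamma> i)))
     = cst (inverse (\<beta> i)) * (cst (\<beta> i) * Xp)"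
    by (simp add: evB_mult evB_diff evB_add algebra_simps)
  show ?thesis unfolding sig_def sigi_def evB_evB e1 h
    by (simp add: evB_XY)
qed

lemma sigi_sig: assumes "\<beta> i \<noteq> 0" shows "sigi \<alpha> \<beta> \<gamma> i (sig \<alpha> \<beta> \<gamma> i f) = f"
proof -
  have "cst (inverse (\<beta> i)) * cst (\<beta> i) = 1" using assms by (simp flip: cst_mult)
  then have h: "cst (\<beta> i) * (cst (inverse (\<beta> i)) * Yp) = Yp"
    by (metis mult.assoc mult.commute mult_1)
  have e1: "evB (cst (inverse (\<beta> i)) * (Yp - cst (\<alpha> i) * Xp - cst (\<gamma> i))) Xp (cst (\<alpha> i) * Yp + cst (\<beta> i) * Xp + cst (\<gamma> i))
     = cst (\<beta> i) * (cst (inverse (\<beta> i)) * Yp) + (cst (\<alpha> i) * Xp - cst (\<beta> i) * (cst (inverse (\<beta> i)) * (cst (\<alpha> i) * Xp)))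
       + (cst (\<gamma> i) - cst (\<beta> i) * (cst (inverse (\<beta> i)) * cst (\<gamma> i)))"
    by (simp add: evB_mult evB_diff evB_add) (simp add: algebra_simps)
  have h2: "cst (\<beta> i) * (cst (inverse (\<beta> i)) * Z) = Z" for Z
    using \<open>cst (inverse (\<beta> i)) * cst (\<beta> i) = 1\<close> by (metis mult.assoc mult.commute mult_1)
  show ?thesis unfolding sig_def sigi_def evB_evB e1 h2
    by (simp add: evB_XY)
qed

lemma sig_add: "sig \<alpha> \<beta> \<gamma> i (a + b) = sig \<alpha> \<beta> \<gamma> i a + sig \<alpha> \<beta> \<gamma> i b" by (simp add: sig_def evB_add)
lemma sig_mult: "sig \<alpha> \<beta> \<gamma> i (a * b) = sig \<alpha> \<beta> \<gamma> i a * sig \<alpha> \<beta> \<gamma> i b" by (simp add: sig_def evB_mult)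
lemma sigi_add: "sigi \<alpha> \<beta> \<gamma> i (a + b) = sigi \<alpha> \<beta> \<gamma> i a + sigi \<alpha> \<beta> \<gamma> i b" by (simp add: sigi_def evB_add)
lemma sigi_mult: "sigi \<alpha> \<beta> \<gamma> i (a * b) = sigi \<alpha> \<beta> \<gamma> i a * sigi \<alpha> \<beta> \<gamma> i b" by (simp add: sigi_def evB_mult)

fun phiw :: "(nat \<Rightarrow> 'k::field) \<Rightarrow> (nat \<Rightarrow> 'k) \<Rightarrow> (nat \<Rightarrow> 'k) \<Rightarrow> arr list \<Rightarrow> 'k bp" where
  "phiw \<alpha> \<beta> \<gamma> [] = 1"
| "phiw \<alpha> \<beta> \<gamma> (U j # w) = Xp * sigi \<alpha> \<beta> \<gamma> j (phiw \<alpha> \<beta> \<gamma> w)"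
| "phiw \<alpha> \<beta> \<gamma> (D j # w) = sig \<alpha> \<beta> \<gamma> j (phiw \<alpha> \<beta> \<gamma> w)"

fun Tw :: "(nat \<Rightarrow> 'k::field) \<Rightarrow> (nat \<Rightarrow> 'k) \<Rightarrow> (nat \<Rightarrow> 'k) \<Rightarrow> arr list \<Rightarrow> 'k bp \<Rightarrow> 'k bp" where
  "Tw \<alpha> \<beta> \<gamma> [] f = f"
| "Tw \<alpha> \<beta> \<gamma> (U j # w) f = sigi \<alpha> \<beta> \<gamma> j (Tw \<alpha> \<beta> \<gamma> w f)"
| "Tw \<alpha> \<beta> \<gamma> (D j # w) f = sig \<alpha> \<beta> \<gamma> j (Tw \<alpha> \<beta> \<gamma> w f)"

fun degw :: "arr list \<Rightarrow> int" where
  "degw [] = 0"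
| "degw (U j # w) = degw w - 1"
| "degw (D j # w) = degw w + 1"

fun Dn :: "nat \<Rightarrow> (nat \<Rightarrow> 'k::field) \<Rightarrow> (nat \<Rightarrow> 'k) \<Rightarrow> (nat \<Rightarrow> 'k) \<Rightarrow> nat \<Rightarrow> nat \<Rightarrow> 'k bp \<Rightarrow> 'k bp" where
  "Dn n \<alpha> \<beta> \<gamma> v 0 f = f"
| "Dn n \<alpha> \<beta> \<gamma> v (Suc k) f = sig \<alpha> \<beta> \<gamma> (mdec n v) (Dn n \<alpha> \<beta> \<gamma> (mdec n v) k f)"

fun Up :: "nat \<Rightarrow> (nat \<Rightarrow> 'k::field) \<Rightarrow> (nat \<Rightarrow> 'k) \<Rightarrow> (nat \<Rightarrow> 'k) \<Rightarrow> nat \<Rightarrow> nat \<Rightarrow> 'k bp \<Rightarrow> 'k bp" where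
  "Up n \<alpha> \<beta> \<gamma> v 0 f = f"
| "Up n \<alpha> \<beta> \<gamma> v (Suc k) f = sigi \<alpha> \<beta> \<gamma> v (Up n \<alpha> \<beta> \<gamma> (minc n v) k f)"

definition TT :: "nat \<Rightarrow> (nat \<Rightarrow> 'k::field) \<Rightarrow> (nat \<Rightarrow> 'k) \<Rightarrow> (nat \<Rightarrow> 'k) \<Rightarrow> nat \<Rightarrow> int \<Rightarrow> 'k bp \<Rightarrow> 'k bp" where
  "TT n \<alpha> \<beta> \<gamma> v m f = (if 0 \<le> m then Dn n \<alpha> \<beta> \<gamma> v (nat m) f else Up n \<alpha> \<beta> \<gamma> v (nat (- m)) f)"

lemma sig_cst[simp]: "sig \<alpha> \<beta> \<gamma> i (cst c) = cst c" by (simp add: sig_def)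
lemma sigi_cst[simp]: "sigi \<alpha> \<beta> \<gamma> i (cst c) = cst c" by (simp add: sigi_def)
lemma sig_1[simp]: "sig \<alpha> \<beta> \<gamma> i 1 = 1" by (simp add: sig_def)
lemma sigi_1[simp]: "sigi \<alpha> \<beta> \<gamma> i 1 = 1" by (simp add: sigi_def)
lemma sig_0[simp]: "sig \<alpha> \<beta> \<gamma> i 0 = 0" by (simp add: sig_def)
lemma sigi_0[simp]: "sigi \<alpha> \<beta> \<gamma> i 0 = 0" by (simp add: sigi_def)
lemma sig_X[simp]: "sig \<alpha> \<beta> \<gamma> i Xp = Yp" by (simp add: sig_def)
lemma sigi_Y[simp]: "sigi \<alpha> \<beta> \<gamma> i Yp = Xp" by (simp add: sigi_def)
lemma sig_Y: "sig \<alpha> \<beta> \<gamma> i Yp = cst (\<alpha> i) * Yp + cst (\<beta> i) * Xp + cst (\<gamma> i)" by (simp add: sig_def)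
lemma sigi_X: "sigi \<alpha> \<beta> \<gamma> i Xp = cst (inverse (\<beta> i)) * (Yp - cst (\<alpha> i) * Xp - cst (\<gamma> i))" by (simp add: sigi_def)
lemma sig_diff: "sig \<alpha> \<beta> \<gamma> i (a - b) = sig \<alpha> \<beta> \<gamma> i a - sig \<alpha> \<beta> \<gamma> i b" by (simp add: sig_def evB_diff)
lemma sigi_diff: "sigi \<alpha> \<beta> \<gamma> i (a - b) = sigi \<alpha> \<beta> \<gamma> i a - sigi \<alpha> \<beta> \<gamma> i b" by (simp add: sigi_def evB_diff)
lemma sig_sum: "sig \<alpha> \<beta> \<gamma> i (sum f A) = (\<Sum>x\<in>A. sig \<alpha> \<beta> \<gamma> i (f x))" by (simp add: sig_def evB_sum)

lemma Tw_add: "Tw \<alpha> \<beta> \<gamma> w (a + b) = Tw \<alpha> \<beta> \<gamma> w a + Tw \<alpha> \<beta> \<gamma> w b"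
  by (induction \<alpha> \<beta> \<gamma> w a rule: Tw.induct) (simp_all add: sig_add sigi_add)
lemma Tw_mult: "Tw \<alpha> \<beta> \<gamma> w (a * b) = Tw \<alpha> \<beta> \<gamma> w a * Tw \<alpha> \<beta> \<gamma> w b"
  by (induction \<alpha> \<beta> \<gamma> w a rule: Tw.induct) (simp_all add: sig_mult sigi_mult)
lemma Tw_cst[simp]: "Tw \<alpha> \<beta> \<gamma> w (cst c) = cst c"
proof (induction w)
  case (Cons a w) then show ?case by (cases a) simp_all
qed simp
lemma Tw_0[simp]: "Tw \<alpha> \<beta> \<gamma> w 0 = 0"
  using Tw_cst[of \<alpha> \<beta> \<gamma> w 0] by simp
lemma Tw_diff: "Tw \<alpha> \<beta> \<gamma> w (a - b) = Tw \<alpha> \<beta> \<gamma> w a - Tw \<alpha> \<beta> \<gamma> w b"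
  by (induction \<alpha> \<beta> \<gamma> w a rule: Tw.induct) (simp_all add: sig_diff sigi_diff)
lemma Tw_sum: "Tw \<alpha> \<beta> \<gamma> w (sum f A) = (\<Sum>x\<in>A. Tw \<alpha> \<beta> \<gamma> w (f x))"
  by (rule hom_sum) (simp_all add: Tw_add)

lemma phiw_append: "phiw \<alpha> \<beta> \<gamma> (w1 @ w2) = phiw \<alpha> \<beta> \<gamma> w1 * Tw \<alpha> \<beta> \<gamma> w1 (phiw \<alpha> \<beta> \<gamma> w2)"
proof (induction w1)
  case (Cons a w1) then show ?case by (cases a) (simp_all add: sig_mult sigi_mult mult.assoc)
qed simp

lemma degw_append: "degw (w1 @ w2) = degw w1 + degw w2"
proof (induction w1)
  case (Cons a w1) then show ?case by (cases a) simp_all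
qed simp

locale QH =
  fixes n :: nat and \<alpha> \<beta> \<gamma> :: "nat \<Rightarrow> 'k::field"
  assumes n1: "1 \<le> n" and bnz: "\<And>i. i < n \<Longrightarrow> \<beta> i \<noteq> 0"
begin

lemma mdec_lt[simp]: "mdec n v < n" using n1 by (simp add: mdec_def)
lemma minc_lt[simp]: "minc n v < n" using n1 by (simp add: minc_def)
lemma minc_mdec[simp]: "v < n \<Longrightarrow> minc n (mdec n v) = v"
proof -
  assume v: "v < n"
  have "minc n (mdec n v) = (v + n - 1 + 1) mod n" unfolding minc_def mdec_def by (simp add: mod_Suc_eq)
  also have "v + n - 1 + 1 = v + n" using n1 by simp
  finally show ?thesis using v by simp
qed
lemma mdec_minc[simp]: "v < n \<Longrightarrow> mdec n (minc n v) = v"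
proof -
  assume v: "v < n"
  have "mdec n (minc n v) = ((v + 1) mod n + (n - 1)) mod n" unfolding minc_def mdec_def using n1 by simp
  also have "\<dots> = (v + 1 + (n - 1)) mod n" by (simp add: mod_add_left_eq)
  also have "\<dots> = (v + 1 + n - 1) mod n" using n1 by simp
  also have "v + 1 + n - 1 = v + n" by simp
  finally show ?thesis using v by simp
qed

lemma suc_mod_minc[simp]: "Suc v mod n = minc n v" by (simp add: minc_def)

lemma valid_D: "valid_from n v (D j # w) \<longleftrightarrow> j < n \<and> minc n j = v \<and> valid_from n j w"
  by simp
lemma valid_U: "valid_from n v (U j # w) \<longleftrightarrow> j < n \<and> j = v \<and> valid_from n (minc n j) w"
  by auto

abbreviation "sg \<equiv> sig \<alpha> \<beta> \<gamma>"
abbreviation "sgi \<equiv> sigi \<alpha> \<beta> \<gamma>"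
abbreviation "TTv \<equiv> TT n \<alpha> \<beta> \<gamma>"

lemma TT_D: assumes "v < n" shows "sg (mdec n v) (TTv (mdec n v) m f) = TTv v (m + 1) f"
proof (cases "0 \<le> m")
  case True
  then have "nat (m + 1) = Suc (nat m)" by simp
  then show ?thesis using True by (simp add: TT_def)
next
  case False
  then obtain k where k: "nat (- m) = Suc k" by (metis gr0_implies_Suc zero_less_nat_eq neg_0_less_iff_less not_le)
  have m1: "nat (- (m + 1)) = k" using k by simp
  show ?thesis using False k m1 assms
    by (auto simp: TT_def sig_sigi bnz)
qed

lemma TT_U: assumes "v < n" shows "sgi v (TTv (minc n v) m f) = TTv v (m - 1) f"
proof (cases "m \<le> 0")
  case True
  then have "nat (- (m - 1)) = Suc (nat (- m))" by simp
  then show ?thesis using True by (auto simp: TT_def)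
next
  case False
  then obtain k where k: "nat m = Suc k" by (metis gr0_implies_Suc zero_less_nat_eq not_le)
  have m1: "nat (m - 1) = k" using k by simp
  show ?thesis using False k m1 assms
    by (auto simp: TT_def sigi_sig bnz)
qed

lemma Tw_TT: "v < n \<Longrightarrow> valid_from n v w \<Longrightarrow> Tw \<alpha> \<beta> \<gamma> w f = TTv v (degw w) f"
proof (induction w arbitrary: v)
  case Nil then show ?case by (simp add: TT_def)
next
  case (Cons a w)
  show ?case
  proof (cases a)
    case (U j)
    have h: "valid_from n v (U j # w)" using Cons.prems(2) U by (simp only:)
    then have c: "arr_src n (U j) = v" "valid_from n (arr_tgt n (U j)) w" by (simp_all only: valid_from.simps)
    have jv: "j = v" using c(1) by simp
    have "arr_tgt n (U j) = minc n v" unfolding jv by (simp only: arr_tgt.simps minc_def)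
    then have j: "j = v" "valid_from n (minc n v) w" using c(2) jv by simp_all
    have "Tw \<alpha> \<beta> \<gamma> (a # w) f = sgi v (Tw \<alpha> \<beta> \<gamma> w f)" using U j by simp
    also have "\<dots> = sgi v (TTv (minc n v) (degw w) f)" using Cons.IH[OF minc_lt j(2)] by simp
    also have "\<dots> = TTv v (degw w - 1) f" by (rule TT_U[OF Cons.prems(1)])
    finally show ?thesis using U by simp
  next
    case (D j)
    have h: "valid_from n v (D j # w)" using Cons.prems(2) D by (simp only:)
    then have c: "arr_idx (D j) < n" "arr_src n (D j) = v" "valid_from n (arr_tgt n (D j)) w" by (simp_all only: valid_from.simps)
    have j: "j < n" "minc n j = v" "valid_from n j w"
      using c by (simp_all only: arr_idx.simps arr_src.simps arr_tgt.simps minc_def)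
    have jv: "j = mdec n v" using mdec_minc[OF j(1)] j(2) by simp
    have "Tw \<alpha> \<beta> \<gamma> (a # w) f = sg j (Tw \<alpha> \<beta> \<gamma> w f)" using D by simp
    also have "\<dots> = sg j (TTv j (degw w) f)" using Cons.IH[OF j(1) j(3)] by simp
    also have "\<dots> = TTv v (degw w + 1) f" unfolding jv by (rule TT_D[OF Cons.prems(1)])
    finally show ?thesis using D by simp
  qed
qed

lemma Dn_inj: "v < n \<Longrightarrow> Dn n \<alpha> \<beta> \<gamma> v k f = 0 \<Longrightarrow> f = 0"
proof (induction k arbitrary: v)
  case (Suc k)
  then have "sgi (mdec n v) (sg (mdec n v) (Dn n \<alpha> \<beta> \<gamma> (mdec n v) k f)) = 0" by simp
  then have "Dn n \<alpha> \<beta> \<gamma> (mdec n v) k f = 0" by (simp add: sigi_sig bnz)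
  then show ?case using Suc.IH[OF mdec_lt] by blast
qed simp

lemma Up_inj: "v < n \<Longrightarrow> Up n \<alpha> \<beta> \<gamma> v k f = 0 \<Longrightarrow> f = 0"
proof (induction k arbitrary: v)
  case (Suc k)
  then have "sg v (sgi v (Up n \<alpha> \<beta> \<gamma> (minc n v) k f)) = 0" by simp
  then have "Up n \<alpha> \<beta> \<gamma> (minc n v) k f = 0" using Suc.prems by (simp add: sig_sigi bnz)
  then show ?case using Suc.IH[OF minc_lt] by blast
qed simp

lemma TT_inj: "v < n \<Longrightarrow> TTv v m f = 0 \<Longrightarrow> f = 0"
  by (auto simp: TT_def split: if_splits dest: Dn_inj Up_inj)

lemma TT_0: "TTv v 0 f = f" by (simp add: TT_def)

end

definition fs :: "(path \<Rightarrow> 'k::field) \<Rightarrow> bool" where "fs x = finite {p. x p \<noteq> 0}"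

definition Phi :: "(nat \<Rightarrow> 'k::field) \<Rightarrow> (nat \<Rightarrow> 'k) \<Rightarrow> (nat \<Rightarrow> 'k) \<Rightarrow> (path \<Rightarrow> 'k) \<Rightarrow> nat \<Rightarrow> int \<Rightarrow> 'k bp" where
  "Phi \<alpha> \<beta> \<gamma> x v M = (\<Sum>p\<in>{p. x p \<noteq> 0}. if fst p = v \<and> degw (snd p) = M then cst (x p) * phiw \<alpha> \<beta> \<gamma> (snd p) else 0)"

lemma Phi_eq: assumes "finite S" "{p. x p \<noteq> 0} \<subseteq> S"
  shows "Phi \<alpha> \<beta> \<gamma> x v M = (\<Sum>p\<in>S. if fst p = v \<and> degw (snd p) = M then cst (x p) * phiw \<alpha> \<beta> \<gamma> (snd p) else 0)"
  unfolding Phi_def by (rule sum.mono_neutral_left) (use assms in auto)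

lemma fs_pth[simp]: "fs (pth p)" by (simp add: fs_def pth_def)
lemma fs_zero[simp]: "fs 0" "fs (\<lambda>_. 0)" by (simp_all add: fs_def)
lemma fs_add: "fs x \<Longrightarrow> fs y \<Longrightarrow> fs (x + y)"
  unfolding fs_def by (rule finite_subset[of _ "{p. x p \<noteq> 0} \<union> {p. y p \<noteq> 0}"]) auto
lemma fs_sc: "fs x \<Longrightarrow> fs (sc c x)"
  unfolding fs_def by (rule finite_subset[of _ "{p. x p \<noteq> 0}"]) auto
lemma fs_uminus: "fs x \<Longrightarrow> fs (- x)"
  unfolding fs_def by (rule finite_subset[of _ "{p. x p \<noteq> 0}"]) auto
lemma fs_diff: "fs x \<Longrightarrow> fs y \<Longrightarrow> fs (x - y)"
  unfolding fs_def by (rule finite_subset[of _ "{p. x p \<noteq> 0} \<union> {p. y p \<noteq> 0}"]) auto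
lemma fs_sum: "(\<And>j. j \<in> J \<Longrightarrow> fs (f j)) \<Longrightarrow> fs (sum f J)"
  by (induction J rule: infinite_finite_induct) (simp_all add: fs_add del: plus_fun_apply)
lemma fs_pmult: assumes "fs x" "fs y" shows "fs (pmult n x y)"
proof -
  have "{t. pmult n x y t \<noteq> 0} \<subseteq> (\<lambda>(p, q). (fst p, snd p @ snd q)) ` ({p. x p \<noteq> 0} \<times> {p. y p \<noteq> 0})"
  proof
    fix t assume "t \<in> {t. pmult n x y t \<noteq> 0}"
    then obtain v cs where t: "t = (v, cs)" and nz: "pmult n x y (v, cs) \<noteq> 0" by (cases t) auto
    then obtain k where "x (v, take k cs) * y (path_tgt n v (take k cs), drop k cs) \<noteq> 0"
      unfolding pmult_def by (auto elim: sum.not_neutral_contains_not_neutral)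
    then show "t \<in> (\<lambda>(p, q). (fst p, snd p @ snd q)) ` ({p. x p \<noteq> 0} \<times> {p. y p \<noteq> 0})"
      unfolding t by (intro image_eqI[of _ _ "((v, take k cs), (path_tgt n v (take k cs), drop k cs))"]) auto
  qed
  then show ?thesis using assms unfolding fs_def by (meson finite_SigmaI finite_imageI finite_subset)
qed

lemma rel1_eq: "rel1 n \<alpha> \<beta> \<gamma> i = pth (i, [D (mdec n i), U (mdec n i), U i]) - sc (\<alpha> i) (pth (i, [U i, D i, U i]))
   - sc (\<beta> i) (pth (i, [U i, U (minc n i), D (minc n i)])) - sc (\<gamma> i) (pth (i, [U i]))"
  by (rule ext) (simp add: rel1_def)

lemma rel2_eq: "rel2 n \<alpha> \<beta> \<gamma> i = pth (minc n i, [D i, D (mdec n i), U (mdec n i)]) - sc (\<alpha> i) (pth (minc n i, [D i, U i, D i]))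
   - sc (\<beta> i) (pth (minc n i, [U (minc n i), D (minc n i), D i])) - sc (\<gamma> i) (pth (minc n i, [D i]))"
  by (rule ext) (simp add: rel2_def)

lemma fs_rel: "fs (rel1 n \<alpha> \<beta> \<gamma> i)" "fs (rel2 n \<alpha> \<beta> \<gamma> i)"
  unfolding rel1_eq rel2_eq by (intro fs_diff fs_sc fs_pth)+

lemma fs_I: "x \<in> relideal n \<alpha> \<beta> \<gamma> \<Longrightarrow> fs x"
proof (induction rule: relideal.induct)
  case (step x i p q r c)
  have "fs r" using step.hyps(5) fs_rel by blast
  then have "fs (sc c (pmult n (pmult n (pth p) r) (pth q)))" by (intro fs_sc fs_pmult fs_pth)
  moreover have "(\<lambda>t. x t + c * pmult n (pmult n (pth p) r) (pth q) t) = x + sc c (pmult n (pmult n (pth p) r) (pth q))"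
    by (rule ext) simp
  ultimately show ?case using step.IH fs_add by metis
qed simp

lemma Phi_add: assumes "fs x" "fs y" shows "Phi \<alpha> \<beta> \<gamma> (x + y) v M = Phi \<alpha> \<beta> \<gamma> x v M + Phi \<alpha> \<beta> \<gamma> y v M"
proof -
  define S where "S = {p. x p \<noteq> 0} \<union> {p. y p \<noteq> 0}"
  have fin: "finite S" using assms by (simp add: S_def fs_def)
  show ?thesis
    apply (subst (1 2 3) Phi_eq[OF fin])
    by (auto simp: S_def cst_add distrib_right sum.distrib[symmetric] intro!: sum.cong)
qed

lemma Phi_sc: assumes "fs x" shows "Phi \<alpha> \<beta> \<gamma> (sc c x) v M = cst c * Phi \<alpha> \<beta> \<gamma> x v M"
proof -
  define S where "S = {p. x p \<noteq> 0}"
  have fin: "finite S" using assms by (simp add: S_def fs_def)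
  show ?thesis
    apply (subst (1 2) Phi_eq[OF fin])
    by (auto simp: S_def cst_mult sum_distrib_left mult.assoc intro!: sum.cong)
qed

lemma Phi_zero[simp]: "Phi \<alpha> \<beta> \<gamma> 0 v M = 0" "Phi \<alpha> \<beta> \<gamma> (\<lambda>_. 0) v M = 0"
  by (simp_all add: Phi_def)

lemma Phi_uminus: assumes "fs x" shows "Phi \<alpha> \<beta> \<gamma> (- x) v M = - Phi \<alpha> \<beta> \<gamma> x v M"
proof -
  have e: "- x = sc (-1) x" by (rule ext) simp
  show ?thesis by (simp only: e Phi_sc[OF assms]) (simp add: cst_uminus)
qed

lemma Phi_diff: assumes "fs x" "fs y" shows "Phi \<alpha> \<beta> \<gamma> (x - y) v M = Phi \<alpha> \<beta> \<gamma> x v M - Phi \<alpha> \<beta> \<gamma> y v M"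
proof -
  have e: "x - y = x + (- y)" by (rule diff_conv_add_uminus)
  show ?thesis by (simp only: e Phi_add[OF assms(1) fs_uminus[OF assms(2)]] Phi_uminus[OF assms(2)] diff_conv_add_uminus)
qed

lemma Phi_sum: "(\<And>j. j \<in> J \<Longrightarrow> fs (f j)) \<Longrightarrow> Phi \<alpha> \<beta> \<gamma> (sum f J) v M = (\<Sum>j\<in>J. Phi \<alpha> \<beta> \<gamma> (f j) v M)"
proof (induction J rule: infinite_finite_induct)
  case (insert j J)
  have "Phi \<alpha> \<beta> \<gamma> (sum f (insert j J)) v M = Phi \<alpha> \<beta> \<gamma> (f j + sum f J) v M"
    unfolding sum.insert[OF insert.hyps] ..
  also have "\<dots> = Phi \<alpha> \<beta> \<gamma> (f j) v M + Phi \<alpha> \<beta> \<gamma> (sum f J) v M"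
    by (rule Phi_add) (use insert.prems in \<open>auto intro: fs_sum\<close>)
  also have "Phi \<alpha> \<beta> \<gamma> (sum f J) v M = (\<Sum>j\<in>J. Phi \<alpha> \<beta> \<gamma> (f j) v M)"
    by (rule insert.IH) (use insert.prems in auto)
  finally show ?case by (simp only: sum.insert[OF insert.hyps])
qed simp_all

lemma Phi_pth: "Phi \<alpha> \<beta> \<gamma> (pth p) v M = (if fst p = v \<and> degw (snd p) = M then phiw \<alpha> \<beta> \<gamma> (snd p) else 0)"
proof -
  have "{q. pth p q \<noteq> (0::'a)} \<subseteq> {p}" by (auto simp: pth_def)
  then show ?thesis by (subst Phi_eq[of "{p}"]) (auto simp: pth_def)
qed

lemma pth3: "pmult n (pmult n (pth p) (pth s)) (pth q) =
   (if fst s = path_tgt n (fst p) (snd p) \<and> fst q = path_tgt n (fst s) (snd s) then pth (fst p, snd p @ snd s @ snd q) else 0)"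
  by (auto simp: pth_mult_pth path_tgt_append zero_fun_lam)

context QH begin

abbreviation "ph \<equiv> phiw \<alpha> \<beta> \<gamma>"
abbreviation "Tv \<equiv> Tw \<alpha> \<beta> \<gamma>"
abbreviation "PH \<equiv> Phi \<alpha> \<beta> \<gamma>"

lemma Phi_rel_gen:
  assumes u: "u < n"
    and v: "valid_from n u S1" "valid_from n u S2" "valid_from n u S3" "valid_from n u S4"
    and d: "degw S2 = degw S1" "degw S3 = degw S1" "degw S4 = degw S1"
    and e: "path_tgt n u S2 = path_tgt n u S1" "path_tgt n u S3 = path_tgt n u S1" "path_tgt n u S4 = path_tgt n u S1"
    and comb: "ph S1 - cst a2 * ph S2 - cst a3 * ph S3 - cst a4 * ph S4 = 0"
  shows "PH (pmult n (pmult n (pth p) (pth (u,S1) - sc a2 (pth (u,S2)) - sc a3 (pth (u,S3)) - sc a4 (pth (u,S4)))) (pth q)) w M = 0"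
proof -
  define P3 where "P3 = (\<lambda>S. pmult n (pmult n (pth p) (pth (u, S))) (pth q) :: path \<Rightarrow> 'k)"
  have G: "pmult n (pmult n (pth p) (pth (u,S1) - sc a2 (pth (u,S2)) - sc a3 (pth (u,S3)) - sc a4 (pth (u,S4)))) (pth q)
     = P3 S1 - sc a2 (P3 S2) - sc a3 (P3 S3) - sc a4 (P3 S4)"
    unfolding P3_def by (simp only: pmult_diff_left pmult_diff_right pmult_sc_left pmult_sc_right)
  show ?thesis
  proof (cases "u = path_tgt n (fst p) (snd p) \<and> fst q = path_tgt n u S1")
    case False
    then have "P3 S = 0" if "S \<in> {S1, S2, S3, S4}" for S
      using that e unfolding P3_def pth3 by auto
    then show ?thesis unfolding G by simp
  next
    case True
    then have P3: "P3 S = pth (fst p, snd p @ S @ snd q)" if "S \<in> {S1, S2, S3, S4}" for S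
      using that e unfolding P3_def pth3 by auto
    have fsP: "fs (P3 S)" if "S \<in> {S1, S2, S3, S4}" for S using P3[OF that] by simp
    define Z where "Z = TTv u (degw S1) (ph (snd q))"
    have phS: "ph (snd p @ S @ snd q) = ph (snd p) * Tv (snd p) (ph S * Z)" if "S \<in> {S1, S2, S3, S4}" for S
    proof -
      have "valid_from n u S" "degw S = degw S1" using that v d by auto
      then show ?thesis unfolding Z_def phiw_append using Tw_TT[OF u] by simp
    qed
    have degS: "degw (snd p @ S @ snd q) = degw (snd p) + degw S1 + degw (snd q)" if "S \<in> {S1, S2, S3, S4}" for S
      using that d by (auto simp: degw_append)
    have PHP: "PH (P3 S) w M = (if fst p = w \<and> degw (snd p) + degw S1 + degw (snd q) = M then ph (snd p) * Tv (snd p) (ph S * Z) else 0)"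
      if "S \<in> {S1, S2, S3, S4}" for S
      using P3[OF that] phS[OF that] degS[OF that] by (simp add: Phi_pth)
    have "PH (P3 S1 - sc a2 (P3 S2) - sc a3 (P3 S3) - sc a4 (P3 S4)) w M
      = PH (P3 S1) w M - cst a2 * PH (P3 S2) w M - cst a3 * PH (P3 S3) w M - cst a4 * PH (P3 S4) w M"
      using fsP by (simp add: Phi_diff Phi_sc fs_diff fs_sc)
    also have "\<dots> = (if fst p = w \<and> degw (snd p) + degw S1 + degw (snd q) = M then
        ph (snd p) * Tv (snd p) ((ph S1 - cst a2 * ph S2 - cst a3 * ph S3 - cst a4 * ph S4) * Z) else 0)"
      by (simp add: PHP Tw_diff Tw_mult Tw_add algebra_simps)
    also have "\<dots> = 0" using comb by simp
    finally show ?thesis unfolding G .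
  qed
qed

lemma Phi_rel1: assumes i: "i < n"
  shows "PH (pmult n (pmult n (pth p) (rel1 n \<alpha> \<beta> \<gamma> i)) (pth q)) w M = 0"
proof -
  have b: "cst (\<beta> i) * cst (inverse (\<beta> i)) = 1" using bnz[OF i] by (simp flip: cst_mult)
  have comb: "ph [D (mdec n i), U (mdec n i), U i] - cst (\<alpha> i) * ph [U i, D i, U i]
     - cst (\<beta> i) * ph [U i, U (minc n i), D (minc n i)] - cst (\<gamma> i) * ph [U i] = 0"
  proof -
    have h1: "ph [D (mdec n i), U (mdec n i), U i] = Yp * Xp" by (simp add: sig_mult sig_sigi bnz)
    have h2: "ph [U i, D i, U i] = Xp * Xp" by (simp add: sig_mult sigi_sig bnz i)
    have h3: "ph [U i, U (minc n i), D (minc n i)] = Xp * (cst (inverse (\<beta> i)) * (Yp - cst (\<alpha> i) * Xp - cst (\<gamma> i)))"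
      by (simp add: sigi_mult sigi_sig bnz sigi_X)
    have h4: "ph [U i] = Xp" by simp
    have h5: "cst (\<beta> i) * (Xp * (cst (inverse (\<beta> i)) * W)) = Xp * W" for W
    proof -
      have "cst (\<beta> i) * (Xp * (cst (inverse (\<beta> i)) * W)) = Xp * ((cst (\<beta> i) * cst (inverse (\<beta> i))) * W)"
        by (simp only: ac_simps)
      then show ?thesis using b by simp
    qed
    show ?thesis unfolding h1 h2 h3 h4 h5 by (simp add: algebra_simps)
  qed
  show ?thesis unfolding rel1_eq
    by (rule Phi_rel_gen[OF i _ _ _ _ _ _ _ _ _ _ comb]) (simp_all add: i)
qed

lemma Phi_rel2: assumes i: "i < n"
  shows "PH (pmult n (pmult n (pth p) (rel2 n \<alpha> \<beta> \<gamma> i)) (pth q)) w M = 0"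
proof -
  have comb: "ph [D i, D (mdec n i), U (mdec n i)] - cst (\<alpha> i) * ph [D i, U i, D i]
     - cst (\<beta> i) * ph [U (minc n i), D (minc n i), D i] - cst (\<gamma> i) * ph [D i] = 0"
  proof -
    have "ph [D i, D (mdec n i), U (mdec n i)] = cst (\<alpha> i) * Yp + cst (\<beta> i) * Xp + cst (\<gamma> i)"
      by (simp add: sig_mult sig_sigi bnz sig_Y)
    moreover have "ph [D i, U i, D i] = Yp" by (simp add: sig_mult sigi_sig bnz i)
    moreover have "ph [U (minc n i), D (minc n i), D i] = Xp"
      by (simp add: sigi_sig bnz)
    moreover have "ph [D i] = 1" by simp
    ultimately show ?thesis by (simp add: algebra_simps)
  qed
  show ?thesis unfolding rel2_eq
    by (rule Phi_rel_gen[OF minc_lt _ _ _ _ _ _ _ _ _ _ comb]) (simp_all add: i)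
qed

lemma Phi_I: "x \<in> relideal n \<alpha> \<beta> \<gamma> \<Longrightarrow> PH x w M = 0"
proof (induction rule: relideal.induct)
  case (step x i p q r c)
  have e: "(\<lambda>t. x t + c * pmult n (pmult n (pth p) r) (pth q) t) = x + sc c (pmult n (pmult n (pth p) r) (pth q))"
    by (rule ext) simp
  have fr: "fs r" using step.hyps(5) fs_rel by blast
  have "PH (pmult n (pmult n (pth p) r) (pth q)) w M = 0"
    using step.hyps(5) Phi_rel1[OF step.hyps(2)] Phi_rel2[OF step.hyps(2)] by blast
  then show ?case unfolding e using step.IH fs_I[OF step.hyps(1)] fr
    by (simp add: Phi_add Phi_sc fs_sc fs_pmult del: plus_fun_apply)
qed simp

end

lemma Dn_add: "Dn n \<alpha> \<beta> \<gamma> v k (a + b) = Dn n \<alpha> \<beta> \<gamma> v k a + Dn n \<alpha> \<beta> \<gamma> v k b"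
  by (induction k arbitrary: v) (simp_all add: sig_add)
lemma Dn_mult: "Dn n \<alpha> \<beta> \<gamma> v k (a * b) = Dn n \<alpha> \<beta> \<gamma> v k a * Dn n \<alpha> \<beta> \<gamma> v k b"
  by (induction k arbitrary: v) (simp_all add: sig_mult)
lemma Dn_cst[simp]: "Dn n \<alpha> \<beta> \<gamma> v k (cst c) = cst c"
  by (induction k arbitrary: v) simp_all
lemma Up_add: "Up n \<alpha> \<beta> \<gamma> v k (a + b) = Up n \<alpha> \<beta> \<gamma> v k a + Up n \<alpha> \<beta> \<gamma> v k b"
  by (induction k arbitrary: v) (simp_all add: sigi_add)
lemma Up_mult: "Up n \<alpha> \<beta> \<gamma> v k (a * b) = Up n \<alpha> \<beta> \<gamma> v k a * Up n \<alpha> \<beta> \<gamma> v k b"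
  by (induction k arbitrary: v) (simp_all add: sigi_mult)
lemma Up_cst[simp]: "Up n \<alpha> \<beta> \<gamma> v k (cst c) = cst c"
  by (induction k arbitrary: v) simp_all
lemma TT_add: "TT n \<alpha> \<beta> \<gamma> v m (a + b) = TT n \<alpha> \<beta> \<gamma> v m a + TT n \<alpha> \<beta> \<gamma> v m b"
  by (simp add: TT_def Dn_add Up_add)
lemma TT_mult: "TT n \<alpha> \<beta> \<gamma> v m (a * b) = TT n \<alpha> \<beta> \<gamma> v m a * TT n \<alpha> \<beta> \<gamma> v m b"
  by (simp add: TT_def Dn_mult Up_mult)
lemma TT_cst[simp]: "TT n \<alpha> \<beta> \<gamma> v m (cst c) = cst c"
  by (simp add: TT_def)
lemma TT_zero[simp]: "TT n \<alpha> \<beta> \<gamma> v m 0 = 0"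
  using TT_cst[of n \<alpha> \<beta> \<gamma> v m 0] by simp
lemma TT_sum: "TT n \<alpha> \<beta> \<gamma> v m (sum f A) = (\<Sum>x\<in>A. TT n \<alpha> \<beta> \<gamma> v m (f x))"
  by (rule hom_sum) (simp_all add: TT_add)

context QH begin

lemma corner_fs: "a \<in> corner n i k \<Longrightarrow> fs a"
  by (simp add: corner_def pathalg_def fs_def)

lemma corner_props: assumes "a \<in> corner n i k" "a p \<noteq> 0"
  shows "fst p = i" "path_tgt n i (snd p) = k" "valid_from n i (snd p)" "i < n"
  using assms by (cases p, auto simp: corner_def pathalg_def path_ok_def)+

lemma Phi_prod:
  assumes a: "a \<in> corner n i k" and b: "b \<in> corner n k j"
  shows "PH (pmult n a b) i M = (\<Sum>p\<in>{p. a p \<noteq> 0}. cst (a p) * ph (snd p) * TTv i (degw (snd p)) (PH b k (M - degw (snd p))))"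
proof -
  define Sa where "Sa = {p. a p \<noteq> 0}"
  define Sb where "Sb = {p. b p \<noteq> 0}"
  have fa: "finite Sa" using corner_fs[OF a] by (simp add: Sa_def fs_def)
  have fb: "finite Sb" using corner_fs[OF b] by (simp add: Sb_def fs_def)
  have ea: "a = (\<Sum>p\<in>Sa. sc (a p) (pth p))" unfolding Sa_def
    by (rule pathalg_expand[of _ n]) (use a in \<open>simp add: corner_def\<close>)
  have eb: "b = (\<Sum>q\<in>Sb. sc (b q) (pth q))" unfolding Sb_def
    by (rule pathalg_expand[of _ n]) (use b in \<open>simp add: corner_def\<close>)
  have pq: "pmult n (pth p) (pth q) = pth (i, snd p @ snd q)" if "p \<in> Sa" "q \<in> Sb" for p q
    using corner_props[OF a, of p] corner_props[OF b, of q] that by (simp add: Sa_def Sb_def pth_mult_pth)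
  have L: "pmult n X b = (\<Sum>q\<in>Sb. sc (b q) (pmult n X (pth q)))" for X
  proof -
    have "pmult n X b = pmult n X (\<Sum>q\<in>Sb. sc (b q) (pth q))" by (rule arg_cong[OF eb])
    then show ?thesis by (simp only: pmult_sum_right pmult_sc_right)
  qed
  have ab: "pmult n a b = (\<Sum>p\<in>Sa. \<Sum>q\<in>Sb. sc (a p * b q) (pth (i, snd p @ snd q)))"
  proof -
    have "pmult n a b = pmult n (\<Sum>p\<in>Sa. sc (a p) (pth p)) b" by (rule arg_cong[OF ea])
    also have "\<dots> = (\<Sum>p\<in>Sa. sc (a p) (\<Sum>q\<in>Sb. sc (b q) (pmult n (pth p) (pth q))))"
      by (simp only: pmult_sum_left L pmult_sc_left)
    also have "\<dots> = (\<Sum>p\<in>Sa. \<Sum>q\<in>Sb. sc (a p * b q) (pth (i, snd p @ snd q)))"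
      unfolding sc_sum sc_sc by (intro sum.cong refl) (simp add: pq)
    finally show ?thesis .
  qed
  have "PH (pmult n a b) i M = (\<Sum>p\<in>Sa. \<Sum>q\<in>Sb. PH (sc (a p * b q) (pth (i, snd p @ snd q))) i M)"
    unfolding ab by (simp add: Phi_sum fs_sum fs_sc)
  also have "\<dots> = (\<Sum>p\<in>Sa. \<Sum>q\<in>Sb. if degw (snd p) + degw (snd q) = M then
         cst (a p) * ph (snd p) * TTv i (degw (snd p)) (cst (b q) * ph (snd q)) else 0)"
  proof (intro sum.cong refl)
    fix p q assume p: "p \<in> Sa" and q: "q \<in> Sb"
    have v: "valid_from n i (snd p)" "i < n" using corner_props[OF a, of p] p by (auto simp: Sa_def)
    show "PH (sc (a p * b q) (pth (i, snd p @ snd q))) i M = (if degw (snd p) + degw (snd q) = M then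
         cst (a p) * ph (snd p) * TTv i (degw (snd p)) (cst (b q) * ph (snd q)) else 0)"
      by (simp add: Phi_sc Phi_pth degw_append phiw_append Tw_TT[OF v(2) v(1)] TT_mult cst_mult ac_simps)
  qed
  also have "\<dots> = (\<Sum>p\<in>Sa. cst (a p) * ph (snd p) * TTv i (degw (snd p)) (PH b k (M - degw (snd p))))"
  proof (intro sum.cong refl)
    fix p assume p: "p \<in> Sa"
    have "PH b k (M - degw (snd p)) = (\<Sum>q\<in>Sb. if fst q = k \<and> degw (snd q) = M - degw (snd p) then cst (b q) * ph (snd q) else 0)"
      by (rule Phi_eq[OF fb]) (simp add: Sb_def)
    also have "\<dots> = (\<Sum>q\<in>Sb. if degw (snd p) + degw (snd q) = M then cst (b q) * ph (snd q) else 0)"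
      by (intro sum.cong refl) (use corner_props[OF b] in \<open>auto simp: Sb_def\<close>)
    finally have Pb: "PH b k (M - degw (snd p)) = (\<Sum>q\<in>Sb. if degw (snd p) + degw (snd q) = M then cst (b q) * ph (snd q) else 0)" .
    have "(\<Sum>q\<in>Sb. if degw (snd p) + degw (snd q) = M then
         cst (a p) * ph (snd p) * TTv i (degw (snd p)) (cst (b q) * ph (snd q)) else 0)
        = (\<Sum>q\<in>Sb. cst (a p) * ph (snd p) * TTv i (degw (snd p)) (if degw (snd p) + degw (snd q) = M then cst (b q) * ph (snd q) else 0))"
      by (intro sum.cong refl) simp
    also have "\<dots> = cst (a p) * ph (snd p) * TTv i (degw (snd p)) (\<Sum>q\<in>Sb. if degw (snd p) + degw (snd q) = M then cst (b q) * ph (snd q) else 0)"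
      by (simp only: TT_sum sum_distrib_left)
    finally show "(\<Sum>q\<in>Sb. if degw (snd p) + degw (snd q) = M then
         cst (a p) * ph (snd p) * TTv i (degw (snd p)) (cst (b q) * ph (snd q)) else 0)
        = cst (a p) * ph (snd p) * TTv i (degw (snd p)) (PH b k (M - degw (snd p)))"
      unfolding Pb .
  qed
  finally show ?thesis unfolding Sa_def .
qed

lemma Phi_fiber: assumes a: "a \<in> corner n i k"
  shows "PH a i m = (\<Sum>p\<in>{p\<in>{p. a p \<noteq> 0}. degw (snd p) = m}. cst (a p) * ph (snd p))"
proof -
  have fa: "finite {p. a p \<noteq> 0}" using corner_fs[OF a] by (simp add: fs_def)
  have "PH a i m = (\<Sum>p\<in>{p. a p \<noteq> 0}. if fst p = i \<and> degw (snd p) = m then cst (a p) * ph (snd p) else 0)"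
    by (rule Phi_eq[OF fa]) simp
  also have "\<dots> = (\<Sum>p\<in>{p. a p \<noteq> 0}. if degw (snd p) = m then cst (a p) * ph (snd p) else 0)"
    by (intro sum.cong refl) (use corner_props[OF a] in auto)
  also have "\<dots> = (\<Sum>p\<in>{p\<in>{p. a p \<noteq> 0}. degw (snd p) = m}. cst (a p) * ph (snd p))"
    by (rule sum.inter_filter[OF fa, symmetric])
  finally show ?thesis .
qed

lemma Phi_prod2:
  assumes a: "a \<in> corner n i k" and b: "b \<in> corner n k j"
  shows "PH (pmult n a b) i M = (\<Sum>m\<in>(\<lambda>p. degw (snd p)) ` {p. a p \<noteq> 0}. PH a i m * TTv i m (PH b k (M - m)))"
proof -
  have fa: "finite {p. a p \<noteq> 0}" using corner_fs[OF a] by (simp add: fs_def)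
  have "PH (pmult n a b) i M = (\<Sum>p\<in>{p. a p \<noteq> 0}. cst (a p) * ph (snd p) * TTv i (degw (snd p)) (PH b k (M - degw (snd p))))"
    by (rule Phi_prod[OF a b])
  also have "\<dots> = (\<Sum>m\<in>(\<lambda>p. degw (snd p)) ` {p. a p \<noteq> 0}. \<Sum>p\<in>{p\<in>{p. a p \<noteq> 0}. degw (snd p) = m}.
       cst (a p) * ph (snd p) * TTv i (degw (snd p)) (PH b k (M - degw (snd p))))"
    by (rule sum.image_gen[OF fa])
  also have "\<dots> = (\<Sum>m\<in>(\<lambda>p. degw (snd p)) ` {p. a p \<noteq> 0}. PH a i m * TTv i m (PH b k (M - m)))"
  proof (intro sum.cong refl)
    fix m
    have "(\<Sum>p\<in>{p\<in>{p. a p \<noteq> 0}. degw (snd p) = m}. cst (a p) * ph (snd p) * TTv i (degw (snd p)) (PH b k (M - degw (snd p))))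
        = (\<Sum>p\<in>{p\<in>{p. a p \<noteq> 0}. degw (snd p) = m}. cst (a p) * ph (snd p) * TTv i m (PH b k (M - m)))"
      by (intro sum.cong refl) auto
    also have "\<dots> = PH a i m * TTv i m (PH b k (M - m))"
      unfolding Phi_fiber[OF a] by (simp only: sum_distrib_right)
    finally show "(\<Sum>p\<in>{p\<in>{p. a p \<noteq> 0}. degw (snd p) = m}. cst (a p) * ph (snd p) * TTv i (degw (snd p)) (PH b k (M - degw (snd p))))
        = PH a i m * TTv i m (PH b k (M - m))" .
  qed
  finally show ?thesis .
qed

lemma Phi_support: assumes a: "a \<in> corner n i k" and "PH a i m \<noteq> 0"
  shows "m \<in> (\<lambda>p. degw (snd p)) ` {p. a p \<noteq> 0}"
proof (rule ccontr)
  assume "m \<notin> (\<lambda>p. degw (snd p)) ` {p. a p \<noteq> 0}"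
  then have "{p\<in>{p. a p \<noteq> 0}. degw (snd p) = m} = {}" by (auto simp: image_iff)
  then have "PH a i m = 0" unfolding Phi_fiber[OF a, of m] by (simp only: sum.empty)
  then show False using assms(2) by simp
qed

lemma Phi_domain:
  assumes a: "a \<in> corner n i k" and b: "b \<in> corner n k j"
    and na: "PH a i ma \<noteq> 0" and nb: "PH b k mb \<noteq> 0"
  shows "\<exists>M. PH (pmult n a b) i M \<noteq> 0"
proof -
  define Dg where "Dg = (\<lambda>p. degw (snd p)) ` {p. a p \<noteq> 0}"
  define Dh where "Dh = (\<lambda>p. degw (snd p)) ` {p. b p \<noteq> 0}"
  have fDg: "finite Dg" using corner_fs[OF a] by (simp add: fs_def Dg_def)
  have fDh: "finite Dh" using corner_fs[OF b] by (simp add: fs_def Dh_def)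
  define Da where "Da = {m. PH a i m \<noteq> 0}"
  define Db where "Db = {m. PH b k m \<noteq> 0}"
  have DaDg: "Da \<subseteq> Dg" using Phi_support[OF a] by (auto simp: Da_def Dg_def)
  have DbDh: "Db \<subseteq> Dh" using Phi_support[OF b] by (auto simp: Db_def Dh_def)
  have fDa: "finite Da" using finite_subset[OF DaDg fDg] .
  have fDb: "finite Db" using finite_subset[OF DbDh fDh] .
  define A where "A = Max Da"
  define B where "B = Max Db"
  have neA: "Da \<noteq> {}" using na by (auto simp: Da_def)
  have neB: "Db \<noteq> {}" using nb by (auto simp: Db_def)
  have A: "A \<in> Da" "\<And>m. m \<in> Da \<Longrightarrow> m \<le> A" using Max_in[OF fDa neA] Max_ge[OF fDa] unfolding A_def by auto
  have B: "B \<in> Db" "\<And>m. m \<in> Db \<Longrightarrow> m \<le> B" using Max_in[OF fDb neB] Max_ge[OF fDb] unfolding B_def by auto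
  have iv: "i < n" using a corner_props na Phi_support[OF a na] by auto
  have "PH (pmult n a b) i (A + B) = (\<Sum>m\<in>Dg. PH a i m * TTv i m (PH b k (A + B - m)))"
    unfolding Dg_def by (rule Phi_prod2[OF a b])
  also have "\<dots> = (\<Sum>m\<in>Dg. if m = A then PH a i A * TTv i A (PH b k B) else 0)"
  proof (intro sum.cong refl)
    fix m assume "m \<in> Dg"
    show "PH a i m * TTv i m (PH b k (A + B - m)) = (if m = A then PH a i A * TTv i A (PH b k B) else 0)"
    proof (cases "m = A")
      case False
      show ?thesis
      proof (cases "m < A")
        case True
        then have "A + B - m \<notin> Db" using B(2) by force
        then show ?thesis using False by (simp add: Db_def)
      next
        case False2: False
        then have "m \<notin> Da" using A(2) False by force
        then show ?thesis using False by (simp add: Da_def)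
      qed
    qed simp
  qed
  also have "\<dots> = PH a i A * TTv i A (PH b k B)"
    using A(1) DaDg fDg by (simp add: sum.delta' subset_iff)
  also have "\<dots> \<noteq> 0"
    using A(1) B(1) TT_inj[OF iv, of A "PH b k B"] by (auto simp: Da_def Db_def)
  finally show ?thesis by blast
qed

end

definition xw :: "nat \<Rightarrow> nat \<Rightarrow> arr list" where "xw n v = [U v, D v]"
definition yw :: "nat \<Rightarrow> nat \<Rightarrow> arr list" where "yw n v = [D (mdec n v), U (mdec n v)]"
definition xws :: "nat \<Rightarrow> nat \<Rightarrow> nat \<Rightarrow> arr list" where "xws n v a = concat (replicate a (xw n v))"
definition yws :: "nat \<Rightarrow> nat \<Rightarrow> nat \<Rightarrow> arr list" where "yws n v b = concat (replicate b (yw n v))"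
definition xyw :: "nat \<Rightarrow> nat \<Rightarrow> nat \<Rightarrow> nat \<Rightarrow> arr list" where "xyw n v a b = xws n v a @ yws n v b"

fun dl :: "nat \<Rightarrow> nat \<Rightarrow> nat \<Rightarrow> arr list" where
  "dl n v 0 = []" | "dl n v (Suc m) = D (mdec n v) # dl n (mdec n v) m"
fun dv :: "nat \<Rightarrow> nat \<Rightarrow> nat \<Rightarrow> nat" where
  "dv n v 0 = v" | "dv n v (Suc m) = dv n (mdec n v) m"
fun ul :: "nat \<Rightarrow> nat \<Rightarrow> nat \<Rightarrow> arr list" where
  "ul n v 0 = []" | "ul n v (Suc m) = U v # ul n (minc n v) m"
fun uv :: "nat \<Rightarrow> nat \<Rightarrow> nat \<Rightarrow> nat" where
  "uv n v 0 = v" | "uv n v (Suc m) = uv n (minc n v) m"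

definition ev :: "nat \<Rightarrow> nat \<Rightarrow> 'k::field bp \<Rightarrow> path \<Rightarrow> 'k" where
  "ev n v f = (\<Sum>(a,b)\<in>supp2 f. sc (coeff2 f a b) (pth (v, xyw n v a b)))"

lemma xws_Suc: "xws n v (Suc a) = xw n v @ xws n v a" by (simp add: xws_def)
lemma yws_Suc: "yws n v (Suc a) = yw n v @ yws n v a" by (simp add: yws_def)
lemma xws_0[simp]: "xws n v 0 = []" by (simp add: xws_def)
lemma yws_0[simp]: "yws n v 0 = []" by (simp add: yws_def)
lemma xws_add: "xws n v (a + c) = xws n v a @ xws n v c" by (simp add: xws_def replicate_add)
lemma yws_add: "yws n v (a + c) = yws n v a @ yws n v c" by (simp add: yws_def replicate_add)
lemma degw_xw[simp]: "degw (xw n v) = 0" by (simp add: xw_def)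
lemma degw_yw[simp]: "degw (yw n v) = 0" by (simp add: yw_def)
lemma degw_xws[simp]: "degw (xws n v a) = 0" by (induction a) (simp_all add: xws_Suc degw_append)
lemma degw_yws[simp]: "degw (yws n v a) = 0" by (induction a) (simp_all add: yws_Suc degw_append)
lemma degw_xyw[simp]: "degw (xyw n v a b) = 0" by (simp add: xyw_def degw_append)
lemma degw_dl[simp]: "degw (dl n v m) = int m" by (induction m arbitrary: v) simp_all
lemma degw_ul[simp]: "degw (ul n v m) = - int m" by (induction m arbitrary: v) simp_all

context QH begin

lemma valid_xw: "v < n \<Longrightarrow> valid_from n v (xw n v) \<and> path_tgt n v (xw n v) = v"
  by (simp add: xw_def)
lemma valid_yw: "v < n \<Longrightarrow> valid_from n v (yw n v) \<and> path_tgt n v (yw n v) = v"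
  by (simp add: yw_def)
lemma valid_xws: "v < n \<Longrightarrow> valid_from n v (xws n v a) \<and> path_tgt n v (xws n v a) = v"
  by (induction a) (simp_all add: xws_Suc valid_from_append path_tgt_append valid_xw)
lemma valid_yws: "v < n \<Longrightarrow> valid_from n v (yws n v a) \<and> path_tgt n v (yws n v a) = v"
  by (induction a) (simp_all add: yws_Suc valid_from_append path_tgt_append valid_yw)
lemma valid_xyw: "v < n \<Longrightarrow> valid_from n v (xyw n v a b) \<and> path_tgt n v (xyw n v a b) = v"
  by (simp add: xyw_def valid_from_append path_tgt_append valid_xws valid_yws)

lemma valid_dl: "v < n \<Longrightarrow> valid_from n v (dl n v m) \<and> path_tgt n v (dl n v m) = dv n v m \<and> dv n v m < n"
  by (induction m arbitrary: v) simp_all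
lemma valid_ul: "v < n \<Longrightarrow> valid_from n v (ul n v m) \<and> path_tgt n v (ul n v m) = uv n v m \<and> uv n v m < n"
  by (induction m arbitrary: v) simp_all

lemma dl_snoc: "dl n v (Suc m) = dl n v m @ [D (mdec n (dv n v m))]"
  by (induction m arbitrary: v) simp_all
lemma ul_snoc: "ul n v (Suc m) = ul n v m @ [U (uv n v m)]"
  by (induction m arbitrary: v) simp_all
lemma dv_Suc': "dv n v (Suc m) = mdec n (dv n v m)"
  by (induction m arbitrary: v) simp_all
lemma uv_Suc': "uv n v (Suc m) = minc n (uv n v m)"
  by (induction m arbitrary: v) simp_all

lemma sigi_inj: assumes "i < n" "sgi i z = 0" shows "z = 0"
proof -
  have "sg i (sgi i z) = z" using bnz[OF assms(1)] by (rule sig_sigi)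
  then show ?thesis using assms(2) by simp
qed

lemma Xp_nz: "Xp \<noteq> (0::'k bp)" by (simp add: Xp_def)

lemma phi_xw: "v < n \<Longrightarrow> ph (xw n v) = Xp" by (simp add: xw_def sigi_sig bnz)
lemma Tw_xw: "v < n \<Longrightarrow> Tv (xw n v) f = f" by (simp add: xw_def sigi_sig bnz)
lemma phi_yw: "v < n \<Longrightarrow> ph (yw n v) = Yp" by (simp add: yw_def sig_sigi bnz)
lemma Tw_yw: "v < n \<Longrightarrow> Tv (yw n v) f = f" by (simp add: yw_def sig_sigi bnz)

lemma Tw_append: "Tv (w1 @ w2) f = Tv w1 (Tv w2 f)"
proof (induction w1)
  case (Cons a w1) then show ?case by (cases a) simp_all
qed simp

lemma phi_xws: "v < n \<Longrightarrow> ph (xws n v a) = Xp ^ a \<and> (\<forall>f. Tv (xws n v a) f = f)"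
  by (induction a) (simp_all add: xws_Suc phiw_append Tw_append phi_xw Tw_xw)
lemma phi_yws: "v < n \<Longrightarrow> ph (yws n v a) = Yp ^ a \<and> (\<forall>f. Tv (yws n v a) f = f)"
  by (induction a) (simp_all add: yws_Suc phiw_append Tw_append phi_yw Tw_yw)
lemma phi_xyw: "v < n \<Longrightarrow> ph (xyw n v a b) = Xp ^ a * Yp ^ b"
  by (simp add: xyw_def phiw_append phi_xws phi_yws)
lemma Tw_xyw: "v < n \<Longrightarrow> Tv (xyw n v a b) f = f"
  by (simp add: xyw_def Tw_append phi_xws phi_yws)

lemma phi_dl: "ph (dl n v m) = 1" by (induction m arbitrary: v) simp_all
lemma phi_ul: "v < n \<Longrightarrow> ph (ul n v m) \<noteq> 0"
proof (induction m arbitrary: v)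
  case (Suc m)
  have "sgi v (ph (ul n (minc n v) m)) \<noteq> 0" using Suc.IH[OF minc_lt] sigi_inj[OF Suc.prems] by blast
  then show ?case using Xp_nz by simp
qed simp

end

lemma coeff2_add: "coeff2 (f + g) a b = coeff2 f a b + coeff2 g a b" by (simp add: coeff2_def)
lemma coeff2_cst_mult: "coeff2 (cst c * f) a b = c * coeff2 f a b"
  by (simp add: coeff2_def cst_def)
lemma coeff2_0[simp]: "coeff2 0 a b = 0" by (simp add: coeff2_def)
lemma supp2_add: "supp2 (f + g) \<subseteq> supp2 f \<union> supp2 g" by (auto simp: supp2_def coeff2_add)
lemma supp2_cst_mult: "supp2 (cst c * f) \<subseteq> supp2 f" by (auto simp: supp2_def coeff2_cst_mult)

lemma ev_alt: assumes "finite S" "supp2 f \<subseteq> S"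
  shows "ev n v f = (\<Sum>(a,b)\<in>S. sc (coeff2 f a b) (pth (v, xyw n v a b)))"
  unfolding ev_def by (rule sum.mono_neutral_left) (use assms in \<open>auto simp: supp2_def\<close>)

lemma ev_add: "ev n v (f + g) = ev n v f + ev n v g"
proof -
  define S where "S = supp2 f \<union> supp2 g"
  have fS: "finite S" by (simp add: S_def finite_supp2)
  show ?thesis
    apply (subst (1 2 3) ev_alt[OF fS])
    using supp2_add[of f g] by (auto simp: S_def coeff2_add sum.distrib[symmetric] split_beta distrib_right intro!: sum.cong ext)
qed

lemma ev_sc: "ev n v (cst c * f) = sc c (ev n v f)"
proof -
  have fS: "finite (supp2 f)" by (simp add: finite_supp2)
  show ?thesis
    apply (subst (1 2) ev_alt[OF fS])
    using supp2_cst_mult[of c f] by (auto simp: coeff2_cst_mult sc_sum sc_sc split_beta intro!: sum.cong)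
qed

lemma ev_0[simp]: "ev n v 0 = 0" by (simp add: ev_def supp2_def)

lemma ev_sum: "ev n v (sum f A) = (\<Sum>x\<in>A. ev n v (f x))"
proof (induction A rule: infinite_finite_induct)
  case (insert x F)
  have "ev n v (sum f (insert x F)) = ev n v (f x + sum f F)" unfolding sum.insert[OF insert.hyps] ..
  also have "\<dots> = ev n v (f x) + ev n v (sum f F)" by (rule ev_add)
  finally show ?case unfolding insert.IH by (simp only: sum.insert[OF insert.hyps])
qed simp_all

lemma ev_mono: "ev n v (cst c * Xp ^ a * Yp ^ b) = sc c (pth (v, xyw n v a b))"
proof -
  have e: "cst c * Xp ^ a * Yp ^ b = (\<Sum>(a',b')\<in>{(a,b)}. cst c * Xp ^ a' * Yp ^ b')" by simp
  have fS: "finite {(a, b)}" by simp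
  have sub: "supp2 (cst c * Xp ^ a * Yp ^ b) \<subseteq> {(a,b)}"
    unfolding supp2_def e using coeff2_sum_monos[OF fS, of "\<lambda>_ _. c"] by auto
  show ?thesis
    apply (subst ev_alt[OF fS sub])
    unfolding e using coeff2_sum_monos[OF fS, of "\<lambda>_ _. c"] by simp
qed

lemma ev_cst: "ev n v (cst c) = sc c (pth (v, []))"
  using ev_mono[of n v c 0 0] by (simp add: xyw_def)
lemma ev_X: "ev n v Xp = pth (v, xw n v)"
  using ev_mono[of n v 1 1 0] by (simp add: xyw_def xws_def)
lemma ev_Y: "ev n v Yp = pth (v, yw n v)"
  using ev_mono[of n v 1 0 1] by (simp add: xyw_def yws_def)
lemma ev_1: "ev n v 1 = pth (v, [])"
  using ev_cst[of n v 1] by simp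

lemma fs_ev: "fs (ev n v f)"
  unfolding ev_def split_beta by (intro fs_sum fs_sc fs_pth)

context QH begin

lemma ev_pathalg: fixes f :: "'k bp" shows "v < n \<Longrightarrow> ev n v f \<in> pathalg n"
proof -
  assume v: "v < n"
  have "ev n v f p \<noteq> 0 \<Longrightarrow> path_ok n p" for p
  proof -
    assume "ev n v f p \<noteq> 0"
    then obtain a b where "pth (v, xyw n v a b) p \<noteq> (0::'k)"
      unfolding ev_def by (auto elim!: sum.not_neutral_contains_not_neutral)
    then have "p = (v, xyw n v a b)" by (simp add: pth_def split: if_splits)
    then show "path_ok n p" using valid_xyw[OF v] v by (simp add: path_ok_def)
  qed
  then show ?thesis using fs_ev[of n v f] by (auto simp: pathalg_def fs_def)
qed

lemma pth_pathalg: "path_ok n p \<Longrightarrow> pth p \<in> pathalg n"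
  by (auto simp: pathalg_def pth_def)

lemma ev_mult_path: assumes v: "v < n"
  shows "pmult n (ev n v f) (pth (v, w)) = (\<Sum>(a,b)\<in>supp2 f. sc (coeff2 f a b) (pth (v, xyw n v a b @ w)))"
  unfolding ev_def pmult_sum_left pmult_sc_left split_beta
  by (intro sum.cong refl) (simp add: pth_mult_pth valid_xyw[OF v])

lemma Phi_ev_path: assumes v: "v < n" and w: "valid_from n v w"
  shows "PH (pmult n (ev n v f) (pth (v, w))) v' M = (if v' = v \<and> degw w = M then f * ph w else 0)"
proof -
  have "PH (pmult n (ev n v f) (pth (v, w))) v' M =
      (\<Sum>(a,b)\<in>supp2 f. cst (coeff2 f a b) * (if v' = v \<and> degw w = M then Xp ^ a * Yp ^ b * ph w else 0))"
    unfolding ev_mult_path[OF v]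
    by (subst Phi_sum) (auto simp: Phi_sc Phi_pth split_beta degw_append phiw_append phi_xyw[OF v] Tw_xyw[OF v] intro!: sum.cong fs_sc)
  also have "\<dots> = (if v' = v \<and> degw w = M then (\<Sum>(a,b)\<in>supp2 f. cst (coeff2 f a b) * Xp ^ a * Yp ^ b) * ph w else 0)"
    by (auto simp: sum_distrib_right split_beta mult.assoc intro!: sum.cong)
  also have "\<dots> = (if v' = v \<and> degw w = M then f * ph w else 0)"
    using bp_expand[OF finite_supp2 order_refl, of f] by simp
  finally show ?thesis .
qed

end

lemma sc_diff: "sc c (x - y) = sc c x - sc c y" by (rule ext) (simp add: right_diff_distrib)

context QH begin

abbreviation cg :: "(path \<Rightarrow> 'k) \<Rightarrow> (path \<Rightarrow> 'k) \<Rightarrow> bool" where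
  "cg x y \<equiv> x - y \<in> relideal n \<alpha> \<beta> \<gamma>"

lemma cg_refl: "cg x x" by simp
lemma cg_eq: "x = y \<Longrightarrow> cg x y" by simp
lemma cg_sym: "cg x y \<Longrightarrow> cg y x"
  using I_uminus by fastforce
lemma cg_trans: "cg x y \<Longrightarrow> cg y z \<Longrightarrow> cg x z"
proof -
  assume "cg x y" "cg y z"
  then have "(x - y) + (y - z) \<in> relideal n \<alpha> \<beta> \<gamma>" by (rule I_add)
  then show ?thesis by (simp add: algebra_simps del: plus_fun_apply)
qed
lemma cg_add: "cg x y \<Longrightarrow> cg x' y' \<Longrightarrow> cg (x + x') (y + y')"
proof -
  assume "cg x y" "cg x' y'"
  then have "(x - y) + (x' - y') \<in> relideal n \<alpha> \<beta> \<gamma>" by (rule I_add)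
  then show ?thesis by (simp add: algebra_simps del: plus_fun_apply)
qed
lemma cg_sc: "cg x y \<Longrightarrow> cg (sc c x) (sc c y)"
  using I_sc by (fastforce simp: sc_diff[symmetric])
lemma cg_sum: "(\<And>j. j \<in> J \<Longrightarrow> cg (f j) (g j)) \<Longrightarrow> cg (sum f J) (sum g J)"
proof (induction J rule: infinite_finite_induct)
  case (insert j J)
  have "cg (sum f J) (sum g J)" by (rule insert.IH) (use insert.prems in auto)
  moreover have "cg (f j) (g j)" by (rule insert.prems) simp
  ultimately have "cg (f j + sum f J) (g j + sum g J)" by (intro cg_add)
  then show ?case by (simp only: sum.insert[OF insert.hyps])
qed simp_all
lemma cg_mult_right: "cg x y \<Longrightarrow> z \<in> pathalg n \<Longrightarrow> cg (pmult n x z) (pmult n y z)"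
  using I_mult_right by (fastforce simp: pmult_diff_left[symmetric])
lemma cg_mult_left: "cg x y \<Longrightarrow> z \<in> pathalg n \<Longrightarrow> cg (pmult n z x) (pmult n z y)"
  using I_mult_left by (fastforce simp: pmult_diff_right[symmetric])

lemma rel1_ctx:
  assumes i: "i < n" and s: "s < n" and P: "valid_from n s P" "path_tgt n s P = i" and Q: "valid_from n (minc n i) Q"
  shows "cg (pth (s, P @ [D (mdec n i), U (mdec n i), U i] @ Q))
     (sc (\<alpha> i) (pth (s, P @ [U i, D i, U i] @ Q)) + sc (\<beta> i) (pth (s, P @ [U i, U (minc n i), D (minc n i)] @ Q))
      + sc (\<gamma> i) (pth (s, P @ [U i] @ Q)))"
proof -
  have ok: "path_ok n (s, P)" "path_ok n (minc n i, Q)" using s P Q by (simp_all add: path_ok_def)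
  have G: "pmult n (pmult n (pth (s, P)) (rel1 n \<alpha> \<beta> \<gamma> i)) (pth (minc n i, Q)) \<in> relideal n \<alpha> \<beta> \<gamma>"
    by (rule I_gen[OF i ok]) simp
  have E: "pmult n (pmult n (pth (s, P)) (rel1 n \<alpha> \<beta> \<gamma> i)) (pth (minc n i, Q)) =
    pth (s, P @ [D (mdec n i), U (mdec n i), U i] @ Q) - sc (\<alpha> i) (pth (s, P @ [U i, D i, U i] @ Q))
     - sc (\<beta> i) (pth (s, P @ [U i, U (minc n i), D (minc n i)] @ Q)) - sc (\<gamma> i) (pth (s, P @ [U i] @ Q))"
    unfolding rel1_eq pmult_diff_left pmult_diff_right pmult_sc_left pmult_sc_right pth3
    using P i by simp
  have E2: "A - (a + b + c) = A - a - b - c" for A a b c :: "path \<Rightarrow> 'k" by (simp add: diff_diff_eq add.assoc)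
  show ?thesis unfolding E2 E[symmetric] by (rule G)
qed

lemma rel2_ctx:
  assumes i: "i < n" and s: "s < n" and P: "valid_from n s P" "path_tgt n s P = minc n i" and Q: "valid_from n i Q"
  shows "cg (pth (s, P @ [D i, D (mdec n i), U (mdec n i)] @ Q))
     (sc (\<alpha> i) (pth (s, P @ [D i, U i, D i] @ Q)) + sc (\<beta> i) (pth (s, P @ [U (minc n i), D (minc n i), D i] @ Q))
      + sc (\<gamma> i) (pth (s, P @ [D i] @ Q)))"
proof -
  have ok: "path_ok n (s, P)" "path_ok n (i, Q)" using s P Q i by (simp_all add: path_ok_def)
  have G: "pmult n (pmult n (pth (s, P)) (rel2 n \<alpha> \<beta> \<gamma> i)) (pth (i, Q)) \<in> relideal n \<alpha> \<beta> \<gamma>"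
    by (rule I_gen[OF i ok]) simp
  have E: "pmult n (pmult n (pth (s, P)) (rel2 n \<alpha> \<beta> \<gamma> i)) (pth (i, Q)) =
    pth (s, P @ [D i, D (mdec n i), U (mdec n i)] @ Q) - sc (\<alpha> i) (pth (s, P @ [D i, U i, D i] @ Q))
     - sc (\<beta> i) (pth (s, P @ [U (minc n i), D (minc n i), D i] @ Q)) - sc (\<gamma> i) (pth (s, P @ [D i] @ Q))"
    unfolding rel2_eq pmult_diff_left pmult_diff_right pmult_sc_left pmult_sc_right pth3
    using P i by simp
  have E2: "A - (a + b + c) = A - a - b - c" for A a b c :: "path \<Rightarrow> 'k" by (simp add: diff_diff_eq add.assoc)
  show ?thesis unfolding E2 E[symmetric] by (rule G)
qed

lemma cg_trans': "cg x y \<Longrightarrow> cg z y' \<Longrightarrow> y = y' \<Longrightarrow> cg x z"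
  using cg_trans cg_sym by blast

lemma swapYX:
  assumes v: "v < n" and s: "s < n" and P: "valid_from n s P" "path_tgt n s P = v" and Q: "valid_from n v Q"
  shows "cg (pth (s, P @ yw n v @ xw n v @ Q)) (pth (s, P @ xw n v @ yw n v @ Q))"
proof -
  have Q1: "valid_from n (minc n v) (D v # Q)" using Q v by simp
  have a: "cg (pth (s, P @ [D (mdec n v), U (mdec n v), U v] @ (D v # Q)))
     (sc (\<alpha> v) (pth (s, P @ [U v, D v, U v] @ (D v # Q))) + sc (\<beta> v) (pth (s, P @ [U v, U (minc n v), D (minc n v)] @ (D v # Q)))
      + sc (\<gamma> v) (pth (s, P @ [U v] @ (D v # Q))))"
    by (rule rel1_ctx[OF v s P Q1])
  have P2: "valid_from n s (P @ [U v])" "path_tgt n s (P @ [U v]) = minc n v"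
    using P v by (simp_all add: valid_from_append path_tgt_append)
  have b: "cg (pth (s, (P @ [U v]) @ [D v, D (mdec n v), U (mdec n v)] @ Q))
     (sc (\<alpha> v) (pth (s, (P @ [U v]) @ [D v, U v, D v] @ Q)) + sc (\<beta> v) (pth (s, (P @ [U v]) @ [U (minc n v), D (minc n v), D v] @ Q))
      + sc (\<gamma> v) (pth (s, (P @ [U v]) @ [D v] @ Q)))"
    by (rule rel2_ctx[OF v s P2 Q])
  have e1: "P @ [D (mdec n v), U (mdec n v), U v] @ (D v # Q) = P @ yw n v @ xw n v @ Q" by (simp add: xw_def yw_def)
  have e2: "(P @ [U v]) @ [D v, D (mdec n v), U (mdec n v)] @ Q = P @ xw n v @ yw n v @ Q" by (simp add: xw_def yw_def)
  have e3: "(P @ [U v]) @ L @ Q = P @ [U v] @ L @ Q" for L by simp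
  have e4: "P @ L @ (D v # Q) = P @ (L @ [D v]) @ Q" for L by simp
  show ?thesis
    by (rule cg_trans'[OF a[unfolded e1] b[unfolded e2]]) simp
qed

lemma swap_ywsX:
  assumes v: "v < n" and s: "s < n" and P: "valid_from n s P" "path_tgt n s P = v" and Q: "valid_from n v Q"
  shows "cg (pth (s, P @ yws n v b @ xw n v @ Q)) (pth (s, P @ xw n v @ yws n v b @ Q))"
  using P
proof (induction b arbitrary: P)
  case 0 then show ?case by simp
next
  case (Suc b)
  have P2: "valid_from n s (P @ yw n v)" "path_tgt n s (P @ yw n v) = v"
    using Suc.prems valid_yw[OF v] by (simp_all add: valid_from_append path_tgt_append)
  have Q2: "valid_from n v (yws n v b @ Q)" using Q valid_yws[OF v] by (simp add: valid_from_append)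
  have 1: "cg (pth (s, (P @ yw n v) @ yws n v b @ xw n v @ Q)) (pth (s, (P @ yw n v) @ xw n v @ yws n v b @ Q))"
    by (rule Suc.IH[OF P2])
  have 2: "cg (pth (s, P @ yw n v @ xw n v @ (yws n v b @ Q))) (pth (s, P @ xw n v @ yw n v @ (yws n v b @ Q)))"
    by (rule swapYX[OF v s Suc.prems Q2])
  show ?case using cg_trans[OF 1[unfolded append_assoc] 2[unfolded append_assoc]] unfolding yws_Suc append_assoc .
qed

lemma swap_ywsxws:
  assumes v: "v < n" and s: "s < n" and P: "valid_from n s P" "path_tgt n s P = v" and Q: "valid_from n v Q"
  shows "cg (pth (s, P @ yws n v b @ xws n v c @ Q)) (pth (s, P @ xws n v c @ yws n v b @ Q))"
  using P
proof (induction c arbitrary: P)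
  case 0 then show ?case by simp
next
  case (Suc c)
  have P2: "valid_from n s (P @ xw n v)" "path_tgt n s (P @ xw n v) = v"
    using Suc.prems valid_xw[OF v] by (simp_all add: valid_from_append path_tgt_append)
  have Q2: "valid_from n v (xws n v c @ Q)" using Q valid_xws[OF v] by (simp add: valid_from_append)
  have 1: "cg (pth (s, P @ yws n v b @ xw n v @ (xws n v c @ Q))) (pth (s, P @ xw n v @ yws n v b @ (xws n v c @ Q)))"
    by (rule swap_ywsX[OF v s Suc.prems Q2])
  have 2: "cg (pth (s, (P @ xw n v) @ yws n v b @ xws n v c @ Q)) (pth (s, (P @ xw n v) @ xws n v c @ yws n v b @ Q))"
    by (rule Suc.IH[OF P2])
  show ?case using cg_trans[OF 1[unfolded append_assoc] 2[unfolded append_assoc]] unfolding xws_Suc append_assoc .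
qed

lemma xyw_mult: assumes v: "v < n"
  shows "cg (pth (v, xyw n v a b @ xyw n v c d)) (pth (v, xyw n v (a + c) (b + d)))"
proof -
  have "cg (pth (v, xws n v a @ yws n v b @ xws n v c @ yws n v d)) (pth (v, xws n v a @ xws n v c @ yws n v b @ yws n v d))"
    by (rule swap_ywsxws[OF v v]) (use valid_xws[OF v] valid_yws[OF v] in auto)
  then show ?thesis by (simp add: xyw_def xws_add yws_add)
qed

lemma ev_mult: assumes v: "v < n"
  shows "cg (pmult n (ev n v f) (ev n v g)) (ev n v (f * g))"
proof -
  define Sf where "Sf = supp2 f"
  define Sg where "Sg = supp2 g"
  have fin: "finite Sf" "finite Sg" by (simp_all add: Sf_def Sg_def finite_supp2)
  have L: "pmult n (pth (v, xyw n v a b)) (ev n v g) = (\<Sum>(c,d)\<in>Sg. sc (coeff2 g c d) (pth (v, xyw n v a b @ xyw n v c d)))" for a b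
    unfolding ev_def Sg_def pmult_sum_right pmult_sc_right split_beta
    by (intro sum.cong refl) (simp add: pth_mult_pth valid_xyw[OF v])
  have "pmult n (ev n v f) (ev n v g) = (\<Sum>(a,b)\<in>Sf. sc (coeff2 f a b) (\<Sum>(c,d)\<in>Sg. sc (coeff2 g c d) (pth (v, xyw n v a b @ xyw n v c d))))"
    unfolding ev_def[of n v f] Sf_def pmult_sum_left pmult_sc_left split_beta
    by (intro sum.cong refl) (simp add: L[unfolded split_beta])
  also have "\<dots> = (\<Sum>(a,b)\<in>Sf. \<Sum>(c,d)\<in>Sg. sc (coeff2 f a b * coeff2 g c d) (pth (v, xyw n v a b @ xyw n v c d)))"
    unfolding sc_sum sc_sc split_beta ..
  finally have "pmult n (ev n v f) (ev n v g) = (\<Sum>(a,b)\<in>Sf. \<Sum>(c,d)\<in>Sg. sc (coeff2 f a b * coeff2 g c d) (pth (v, xyw n v a b @ xyw n v c d)))" .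
  moreover have "cg (\<Sum>(a,b)\<in>Sf. \<Sum>(c,d)\<in>Sg. sc (coeff2 f a b * coeff2 g c d) (pth (v, xyw n v a b @ xyw n v c d)))
     (\<Sum>(a,b)\<in>Sf. \<Sum>(c,d)\<in>Sg. sc (coeff2 f a b * coeff2 g c d) (pth (v, xyw n v (a + c) (b + d))))"
    unfolding split_beta by (intro cg_sum cg_sc xyw_mult[OF v])
  moreover have "(\<Sum>(a,b)\<in>Sf. \<Sum>(c,d)\<in>Sg. sc (coeff2 f a b * coeff2 g c d) (pth (v, xyw n v (a + c) (b + d))))
      = ev n v (\<Sum>(a,b)\<in>Sf. \<Sum>(c,d)\<in>Sg. cst (coeff2 f a b * coeff2 g c d) * Xp ^ (a + c) * Yp ^ (b + d))"
    unfolding ev_sum split_beta ev_mono ..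
  moreover have "(\<Sum>(a,b)\<in>Sf. \<Sum>(c,d)\<in>Sg. cst (coeff2 f a b * coeff2 g c d) * Xp ^ (a + c) * Yp ^ (b + d)) = f * g"
  proof -
    have "f * g = (\<Sum>(a,b)\<in>Sf. cst (coeff2 f a b) * Xp ^ a * Yp ^ b) * (\<Sum>(c,d)\<in>Sg. cst (coeff2 g c d) * Xp ^ c * Yp ^ d)"
      using bp_expand[OF fin(1), of f] bp_expand[OF fin(2), of g] by (simp add: Sf_def Sg_def)
    also have "\<dots> = (\<Sum>(a,b)\<in>Sf. \<Sum>(c,d)\<in>Sg. (cst (coeff2 f a b) * Xp ^ a * Yp ^ b) * (cst (coeff2 g c d) * Xp ^ c * Yp ^ d))"
      by (simp add: sum_product split_beta)
    also have "\<dots> = (\<Sum>(a,b)\<in>Sf. \<Sum>(c,d)\<in>Sg. cst (coeff2 f a b * coeff2 g c d) * Xp ^ (a + c) * Yp ^ (b + d))"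
      by (simp add: cst_mult power_add split_beta ac_simps)
    finally show ?thesis by simp
  qed
  ultimately show ?thesis by simp
qed

end

lemma ev_diff: "ev n v (f - g) = ev n v f - ev n v g"
  using ev_add[of n v "f - g" g] by (simp add: eq_diff_eq)

context QH begin

lemma pathalg_pth_ok: "v < n \<Longrightarrow> valid_from n v w \<Longrightarrow> pth (v, w) \<in> pathalg n"
  by (rule pth_pathalg) (simp add: path_ok_def)

lemma pth_unit_left: assumes v: "v < n" shows "pmult n (pth (v, [])) (ev n v g) = ev n v g"
  unfolding ev_def pmult_sum_right pmult_sc_right split_beta
  by (intro sum.cong refl) (simp add: pth_mult_pth)

lemma pth_unit_right: assumes v: "v < n" shows "pmult n (ev n v g) (pth (v, [])) = ev n v g"
  unfolding ev_def pmult_sum_left pmult_sc_left split_beta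
  by (intro sum.cong refl) (simp add: pth_mult_pth valid_xyw[OF v])

lemma D_comm: assumes w: "w < n"
  shows "cg (pmult n (pth (minc n w, [D w])) (ev n w g)) (pmult n (ev n (minc n w) (sg w g)) (pth (minc n w, [D w])))"
proof (induction g rule: bp_induct)
  case (1 a)
  show ?case by (rule cg_eq) (simp add: ev_cst pmult_sc_left pmult_sc_right pth_mult_pth del: sc_apply)
next
  case 2
  show ?case by (rule cg_eq) (simp add: ev_X ev_Y pth_mult_pth w xw_def yw_def)
next
  case 3
  have r: "cg (pth (minc n w, [] @ [D w, D (mdec n w), U (mdec n w)] @ []))
     (sc (\<alpha> w) (pth (minc n w, [] @ [D w, U w, D w] @ [])) + sc (\<beta> w) (pth (minc n w, [] @ [U (minc n w), D (minc n w), D w] @ []))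
      + sc (\<gamma> w) (pth (minc n w, [] @ [D w] @ [])))"
    by (rule rel2_ctx[OF w minc_lt]) simp_all
  show ?case
    apply (rule cg_trans'[OF _ cg_refl])
    using r apply (simp add: ev_Y pth_mult_pth w yw_def)
    by (simp add: sig_Y ev_add ev_sc ev_X ev_Y ev_cst pmult_add_left pmult_sc_left pth_mult_pth w xw_def yw_def
        del: plus_fun_apply)
next
  case (4 f g)
  then show ?case unfolding sig_add ev_add pmult_add_left pmult_add_right by (rule cg_add)
next
  case (5 f g)
  have d: "pth (minc n w, [D w]) \<in> pathalg n" by (rule pathalg_pth_ok) (simp_all add: w)
  have e1: "ev n w f \<in> pathalg n" "ev n w g \<in> pathalg n" "ev n (minc n w) (sg w f) \<in> pathalg n"
    using ev_pathalg w by auto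
  have s1: "cg (pmult n (pth (minc n w, [D w])) (ev n w (f * g))) (pmult n (pth (minc n w, [D w])) (pmult n (ev n w f) (ev n w g)))"
    by (rule cg_mult_left[OF cg_sym[OF ev_mult[OF w]] d])
  have s2: "cg (pmult n (pmult n (pth (minc n w, [D w])) (ev n w f)) (ev n w g))
                (pmult n (pmult n (ev n (minc n w) (sg w f)) (pth (minc n w, [D w]))) (ev n w g))"
    by (rule cg_mult_right[OF 5(1) e1(2)])
  have s3: "cg (pmult n (ev n (minc n w) (sg w f)) (pmult n (pth (minc n w, [D w])) (ev n w g)))
                (pmult n (ev n (minc n w) (sg w f)) (pmult n (ev n (minc n w) (sg w g)) (pth (minc n w, [D w]))))"
    by (rule cg_mult_left[OF 5(2) e1(3)])
  have s4: "cg (pmult n (pmult n (ev n (minc n w) (sg w f)) (ev n (minc n w) (sg w g))) (pth (minc n w, [D w])))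
                (pmult n (ev n (minc n w) (sg w f * sg w g)) (pth (minc n w, [D w])))"
    by (rule cg_mult_right[OF ev_mult[OF minc_lt] d])
  show ?case
    using cg_trans[OF s1 cg_trans[OF s2[unfolded pmult_assoc] cg_trans[OF s3 s4[unfolded pmult_assoc]]]]
    unfolding sig_mult .
qed

lemma cg_solve: assumes "cg L (sc a A + sc b B + sc c C)" "b \<noteq> 0"
  shows "cg B (sc (inverse b) (L - sc a A - sc c C))"
proof -
  have "sc (- inverse b) (L - (sc a A + sc b B + sc c C)) \<in> relideal n \<alpha> \<beta> \<gamma>" by (rule I_sc[OF assms(1)])
  moreover have "sc (- inverse b) (L - (sc a A + sc b B + sc c C)) = B - sc (inverse b) (L - sc a A - sc c C)"
    using assms(2) by (auto simp: fun_eq_iff field_simps)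
  ultimately show ?thesis by simp
qed

lemma U_comm: assumes w: "w < n"
  shows "cg (pmult n (pth (w, [U w])) (ev n (minc n w) g)) (pmult n (ev n w (sgi w g)) (pth (w, [U w])))"
proof (induction g rule: bp_induct)
  case (1 a)
  show ?case by (rule cg_eq) (simp add: ev_cst pmult_sc_left pmult_sc_right pth_mult_pth del: sc_apply)
next
  case 2
  have r: "cg (pth (w, [] @ [D (mdec n w), U (mdec n w), U w] @ []))
     (sc (\<alpha> w) (pth (w, [] @ [U w, D w, U w] @ [])) + sc (\<beta> w) (pth (w, [] @ [U w, U (minc n w), D (minc n w)] @ []))
      + sc (\<gamma> w) (pth (w, [] @ [U w] @ [])))"
    by (rule rel1_ctx[OF w w]) simp_all
  note r2 = cg_solve[OF r[unfolded append_Nil append_Nil2] bnz[OF w]]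
  have lhs: "pmult n (pth (w, [U w])) (ev n (minc n w) Xp) = pth (w, [U w, U (minc n w), D (minc n w)])"
    by (simp add: ev_X pth_mult_pth xw_def)
  have rhs: "pmult n (ev n w (sgi w Xp)) (pth (w, [U w])) =
     sc (inverse (\<beta> w)) (pth (w, [D (mdec n w), U (mdec n w), U w]) - sc (\<alpha> w) (pth (w, [U w, D w, U w])) - sc (\<gamma> w) (pth (w, [U w])))"
    unfolding sigi_X ev_sc ev_diff ev_X ev_Y ev_cst pmult_sc_left pmult_diff_left
    by (simp add: pth_mult_pth w xw_def yw_def del: sc_apply)
  show ?case unfolding lhs rhs by (rule r2)
next
  case 3
  show ?case by (rule cg_eq) (simp add: ev_X ev_Y pth_mult_pth w xw_def yw_def)
next
  case (4 f g)
  then show ?case unfolding sigi_add ev_add pmult_add_left pmult_add_right by (rule cg_add)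
next
  case (5 f g)
  have d: "pth (w, [U w]) \<in> pathalg n" by (rule pathalg_pth_ok) (simp_all add: w)
  have e1: "ev n (minc n w) f \<in> pathalg n" "ev n (minc n w) g \<in> pathalg n" "ev n w (sgi w f) \<in> pathalg n"
    using ev_pathalg w by auto
  have s1: "cg (pmult n (pth (w, [U w])) (ev n (minc n w) (f * g))) (pmult n (pth (w, [U w])) (pmult n (ev n (minc n w) f) (ev n (minc n w) g)))"
    by (rule cg_mult_left[OF cg_sym[OF ev_mult[OF minc_lt]] d])
  have s2: "cg (pmult n (pmult n (pth (w, [U w])) (ev n (minc n w) f)) (ev n (minc n w) g))
                (pmult n (pmult n (ev n w (sgi w f)) (pth (w, [U w]))) (ev n (minc n w) g))"
    by (rule cg_mult_right[OF 5(1) e1(2)])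
  have s3: "cg (pmult n (ev n w (sgi w f)) (pmult n (pth (w, [U w])) (ev n (minc n w) g)))
                (pmult n (ev n w (sgi w f)) (pmult n (ev n w (sgi w g)) (pth (w, [U w]))))"
    by (rule cg_mult_left[OF 5(2) e1(3)])
  have s4: "cg (pmult n (pmult n (ev n w (sgi w f)) (ev n w (sgi w g))) (pth (w, [U w])))
                (pmult n (ev n w (sgi w f * sgi w g)) (pth (w, [U w])))"
    by (rule cg_mult_right[OF ev_mult[OF w] d])
  show ?case
    using cg_trans[OF s1 cg_trans[OF s2[unfolded pmult_assoc] cg_trans[OF s3 s4[unfolded pmult_assoc]]]]
    unfolding sigi_mult .
qed

lemma DP: assumes v: "v < n"
  shows "cg (pmult n (pth (v, dl n v m)) (ev n (dv n v m) g)) (pmult n (ev n v (Dn n \<alpha> \<beta> \<gamma> v m g)) (pth (v, dl n v m)))"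
  using v
proof (induction m arbitrary: v)
  case 0
  then show ?case by (simp add: pth_unit_left pth_unit_right)
next
  case (Suc m)
  define w where "w = mdec n v"
  have w: "w < n" "minc n w = v" using Suc.prems by (simp_all add: w_def)
  define r where "r = (pth (w, dl n w m) :: path \<Rightarrow> 'k)"
  define h where "h = Dn n \<alpha> \<beta> \<gamma> w m g"
  have split: "pth (v, dl n v (Suc m)) = pmult n (pth (minc n w, [D w])) r"
    unfolding r_def w(2) using Suc.prems by (simp add: pth_mult_pth w_def)
  have rp: "r \<in> pathalg n" unfolding r_def by (rule pathalg_pth_ok) (use valid_dl[OF w(1)] w in auto)
  have d: "pth (minc n w, [D w]) \<in> pathalg n" by (rule pathalg_pth_ok) (use w(1) in simp_all)
  have s1: "cg (pmult n (pth (minc n w, [D w])) (pmult n r (ev n (dv n w m) g)))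
               (pmult n (pth (minc n w, [D w])) (pmult n (ev n w h) r))"
    unfolding r_def h_def by (rule cg_mult_left[OF Suc.IH[OF w(1)] d])
  have s2: "cg (pmult n (pmult n (pth (minc n w, [D w])) (ev n w h)) r) (pmult n (pmult n (ev n (minc n w) (sg w h)) (pth (minc n w, [D w]))) r)"
    by (rule cg_mult_right[OF D_comm[OF w(1)] rp])
  have G1: "pmult n (pth (v, dl n v (Suc m))) (ev n (dv n v (Suc m)) g) = pmult n (pth (minc n w, [D w])) (pmult n r (ev n (dv n w m) g))"
    unfolding split pmult_assoc by (simp add: w_def)
  have G2: "pmult n (ev n v (Dn n \<alpha> \<beta> \<gamma> v (Suc m) g)) (pth (v, dl n v (Suc m))) = pmult n (ev n (minc n w) (sg w h)) (pmult n (pth (minc n w, [D w])) r)"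
    unfolding split using Suc.prems by (simp add: h_def w_def)
  show ?case unfolding G1 G2 by (rule cg_trans[OF s1 s2[unfolded pmult_assoc]])
qed

lemma UP: assumes v: "v < n"
  shows "cg (pmult n (pth (v, ul n v m)) (ev n (uv n v m) g)) (pmult n (ev n v (Up n \<alpha> \<beta> \<gamma> v m g)) (pth (v, ul n v m)))"
  using v
proof (induction m arbitrary: v)
  case 0
  then show ?case by (simp add: pth_unit_left pth_unit_right)
next
  case (Suc m)
  define r where "r = (pth (minc n v, ul n (minc n v) m) :: path \<Rightarrow> 'k)"
  define h where "h = Up n \<alpha> \<beta> \<gamma> (minc n v) m g"
  have split: "pth (v, ul n v (Suc m)) = pmult n (pth (v, [U v])) r"
    unfolding r_def by (simp add: pth_mult_pth)
  have rp: "r \<in> pathalg n" unfolding r_def by (rule pathalg_pth_ok) (use valid_ul[OF minc_lt] in auto)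
  have d: "pth (v, [U v]) \<in> pathalg n" by (rule pathalg_pth_ok) (simp_all add: Suc.prems)
  have s1: "cg (pmult n (pth (v, [U v])) (pmult n r (ev n (uv n (minc n v) m) g)))
               (pmult n (pth (v, [U v])) (pmult n (ev n (minc n v) h) r))"
    unfolding r_def h_def by (rule cg_mult_left[OF Suc.IH[OF minc_lt] d])
  have s2: "cg (pmult n (pmult n (pth (v, [U v])) (ev n (minc n v) h)) r) (pmult n (pmult n (ev n v (sgi v h)) (pth (v, [U v]))) r)"
    by (rule cg_mult_right[OF U_comm[OF Suc.prems] rp])
  have G1: "pmult n (pth (v, ul n v (Suc m))) (ev n (uv n v (Suc m)) g) = pmult n (pth (v, [U v])) (pmult n r (ev n (uv n (minc n v) m) g))"
    unfolding split pmult_assoc by simp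
  have G2: "pmult n (ev n v (Up n \<alpha> \<beta> \<gamma> v (Suc m) g)) (pth (v, ul n v (Suc m))) = pmult n (ev n v (sgi v h)) (pmult n (pth (v, [U v])) r)"
    unfolding split by (simp add: h_def)
  show ?case unfolding G1 G2 by (rule cg_trans[OF s1 s2[unfolded pmult_assoc]])
qed

end

definition NF :: "nat \<Rightarrow> nat \<Rightarrow> (nat \<Rightarrow> 'k::field bp) \<Rightarrow> (nat \<Rightarrow> 'k bp) \<Rightarrow> nat \<Rightarrow> path \<Rightarrow> 'k" where
  "NF n v F G K = (\<Sum>m<K. pmult n (ev n v (F m)) (pth (v, dl n v m))) + (\<Sum>m<K. pmult n (ev n v (G m)) (pth (v, ul n v m)))"

lemma sum_single: assumes "finite A" "\<And>x. x \<in> A \<Longrightarrow> x \<noteq> a \<Longrightarrow> f x = 0"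
  shows "sum f A = (if a \<in> A then f a else 0)"
proof -
  have "sum f A = sum (\<lambda>x. if x = a then f a else 0) A" using assms(2) by (intro sum.cong) auto
  then show ?thesis using assms(1) by (simp add: sum.delta')
qed


lemma NF_extend: assumes "\<forall>m\<ge>K. F m = 0 \<and> G m = 0" "K \<le> K'"
  shows "NF n v F G K' = NF n v F G K"
proof -
  have a: "(\<Sum>m<K'. pmult n (ev n v (F m)) (pth (v, dl n v m))) = (\<Sum>m<K. pmult n (ev n v (F m)) (pth (v, dl n v m)))"
    by (rule sum.mono_neutral_right) (use assms in auto)
  have b: "(\<Sum>m<K'. pmult n (ev n v (G m)) (pth (v, ul n v m))) = (\<Sum>m<K. pmult n (ev n v (G m)) (pth (v, ul n v m)))"
    by (rule sum.mono_neutral_right) (use assms in auto)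
  show ?thesis unfolding NF_def a b ..
qed

lemma NF_add: "NF n v F G K + NF n v F' G' K = NF n v (\<lambda>m. F m + F' m) (\<lambda>m. G m + G' m) K"
  unfolding NF_def ev_add pmult_add_left sum.distrib by (simp add: algebra_simps del: plus_fun_apply)

lemma NF_sc: "sc c (NF n v F G K) = NF n v (\<lambda>m. cst c * F m) (\<lambda>m. cst c * G m) K"
  unfolding NF_def ev_sc pmult_sc_left sc_add sc_sum ..

context QH begin

definition Sp :: "nat \<Rightarrow> (path \<Rightarrow> 'k) \<Rightarrow> bool" where
  "Sp v a \<longleftrightarrow> (\<exists>F G K. (\<forall>m\<ge>K. F m = 0 \<and> G m = 0) \<and> cg a (NF n v F G K))"

lemma Sp_cg: "cg a b \<Longrightarrow> Sp v b \<Longrightarrow> Sp v a"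
  unfolding Sp_def using cg_trans by blast

lemma Sp_0: "Sp v 0"
  unfolding Sp_def by (rule exI[of _ "\<lambda>_. 0"], rule exI[of _ "\<lambda>_. 0"], rule exI[of _ 0]) (simp add: NF_def)

lemma Sp_add: assumes "Sp v a" "Sp v b" shows "Sp v (a + b)"
proof -
  obtain F G K where 1: "\<forall>m\<ge>K. F m = 0 \<and> G m = 0" "cg a (NF n v F G K)" using assms(1) Sp_def by blast
  obtain F' G' K' where 2: "\<forall>m\<ge>K'. F' m = 0 \<and> G' m = 0" "cg b (NF n v F' G' K')" using assms(2) Sp_def by blast
  define K2 where "K2 = max K K'"
  have c1: "cg (a + b) (NF n v F G K2 + NF n v F' G' K2)"
    unfolding K2_def NF_extend[OF 1(1) max.cobounded1] NF_extend[OF 2(1) max.cobounded2] by (rule cg_add[OF 1(2) 2(2)])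
  have c2: "\<forall>m\<ge>K2. F m + F' m = 0 \<and> G m + G' m = 0" using 1(1) 2(1) by (simp add: K2_def)
  show ?thesis unfolding Sp_def
    by (rule exI[of _ "\<lambda>m. F m + F' m"], rule exI[of _ "\<lambda>m. G m + G' m"], rule exI[of _ K2], rule conjI[OF c2 c1[unfolded NF_add]])
qed

lemma Sp_sc: assumes "Sp v a" shows "Sp v (sc c a)"
proof -
  obtain F G K where 1: "\<forall>m\<ge>K. F m = 0 \<and> G m = 0" "cg a (NF n v F G K)" using assms(1) Sp_def by blast
  have c1: "cg (sc c a) (sc c (NF n v F G K))" by (rule cg_sc[OF 1(2)])
  have c2: "\<forall>m\<ge>K. cst c * F m = 0 \<and> cst c * G m = 0" using 1(1) by simp
  show ?thesis unfolding Sp_def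
    by (rule exI[of _ "\<lambda>m. cst c * F m"], rule exI[of _ "\<lambda>m. cst c * G m"], rule exI[of _ K], rule conjI[OF c2 c1[unfolded NF_sc]])
qed

lemma Sp_sum: "(\<And>j. j \<in> J \<Longrightarrow> Sp v (f j)) \<Longrightarrow> Sp v (sum f J)"
proof (induction J rule: infinite_finite_induct)
  case (insert j J)
  have "Sp v (sum f J)" by (rule insert.IH) (use insert.prems in auto)
  moreover have "Sp v (f j)" by (rule insert.prems) simp
  ultimately have "Sp v (f j + sum f J)" by (intro Sp_add)
  then show ?case by (simp only: sum.insert[OF insert.hyps])
qed (simp_all add: Sp_0)

lemma Sp_Dterm: "Sp v (pmult n (ev n v f) (pth (v, dl n v m)))"
proof -
  have "NF n v (\<lambda>k. if k = m then f else 0) (\<lambda>_. 0) (Suc m) = pmult n (ev n v f) (pth (v, dl n v m))"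
    unfolding NF_def by (subst sum_single[of _ m]) auto
  then show ?thesis unfolding Sp_def
    by (intro exI[of _ "\<lambda>k. if k = m then f else 0"] exI[of _ "\<lambda>_. 0"] exI[of _ "Suc m"]) simp
qed

lemma Sp_Uterm: "Sp v (pmult n (ev n v f) (pth (v, ul n v m)))"
proof -
  have "NF n v (\<lambda>_. 0) (\<lambda>k. if k = m then f else 0) (Suc m) = pmult n (ev n v f) (pth (v, ul n v m))"
    unfolding NF_def by (subst (2) sum_single[of _ m]) auto
  then show ?thesis unfolding Sp_def
    by (intro exI[of _ "\<lambda>_. 0"] exI[of _ "\<lambda>k. if k = m then f else 0"] exI[of _ "Suc m"]) simp
qed

lemma tgt_lt: "v < n \<Longrightarrow> valid_from n v cs \<Longrightarrow> path_tgt n v cs < n"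
proof (induction cs arbitrary: v)
  case (Cons a cs)
  then show ?case by (cases a) auto
qed simp

lemma valid_single: assumes "valid_from n t [a]"
  shows "(\<exists>j. a = D j \<and> j < n \<and> minc n j = t) \<or> a = U t"
proof (cases a)
  case (U j)
  then have "arr_src n (U j) = t" using assms by (simp only: valid_from.simps)
  then show ?thesis using U by simp
next
  case (D j)
  then have "arr_idx (D j) < n" "arr_src n (D j) = t" using assms by (simp_all only: valid_from.simps)
  then have "j < n" "minc n j = t" by (simp_all only: arr_idx.simps arr_src.simps minc_def)
  then show ?thesis using D by blast
qed

lemma Sp_D_arrow: assumes v: "v < n" and t: "t < n" and a: "valid_from n t [a]"
  shows "Sp v (pmult n (pmult n (ev n v f) (pth (v, dl n v m))) (pth (t, [a])))"
proof (cases "t = dv n v m")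
  case False
  have "pmult n (pth (v, dl n v m)) (pth (t, [a])) = (\<lambda>_. 0::'k)"
    using False valid_dl[OF v, of m] by (simp add: pth_mult_pth)
  then show ?thesis unfolding pmult_assoc using Sp_0 by (simp add: zero_fun_lam)
next
  case True
  have pm: "pmult n (pmult n (ev n v f) (pth (v, dl n v m))) (pth (t, [a])) = pmult n (ev n v f) (pth (v, dl n v m @ [a]))"
    unfolding pmult_assoc using True valid_dl[OF v, of m] by (simp add: pth_mult_pth)
  from valid_single[OF a] show ?thesis
  proof
    assume "\<exists>j. a = D j \<and> j < n \<and> minc n j = t"
    then obtain j where j: "a = D j" "j < n" "minc n j = t" by blast
    have "j = mdec n (dv n v m)" using mdec_minc[OF j(2)] j(3) True by simp
    then have "dl n v m @ [a] = dl n v (Suc m)" using j(1) by (simp only: dl_snoc)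
    then show ?thesis unfolding pm by (simp only: Sp_Dterm)
  next
    assume aU: "a = U t"
    show ?thesis
    proof (cases m)
      case 0
      then have "dl n v m @ [a] = ul n v 1" using aU True by simp
      then show ?thesis unfolding pm by (simp only: Sp_Uterm)
    next
      case (Suc m')
      define e' where "e' = dv n v m'"
      have e': "e' < n" "path_tgt n v (dl n v m') = e'" "valid_from n v (dl n v m')" using valid_dl[OF v, of m'] by (simp_all add: e'_def)
      have "dl n v m @ [a] = dl n v m' @ yw n e'"
        unfolding Suc dl_snoc aU True dv_Suc' e'_def by (simp add: yw_def)
      then have pm2: "pmult n (pth (v, dl n v m)) (pth (t, [a])) = pmult n (pth (v, dl n v m')) (ev n e' Yp)"
        using True valid_dl[OF v, of m] e' by (simp add: pth_mult_pth ev_Y)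
      have p1: "pth (v, dl n v m') \<in> pathalg n" by (rule pathalg_pth_ok[OF v e'(3)])
      have s1: "cg (pmult n (ev n v f) (pmult n (pth (v, dl n v m')) (ev n e' Yp)))
                   (pmult n (ev n v f) (pmult n (ev n v (Dn n \<alpha> \<beta> \<gamma> v m' Yp)) (pth (v, dl n v m'))))"
        by (rule cg_mult_left[OF DP[OF v, of m' Yp, folded e'_def] ev_pathalg[OF v]])
      have s2: "cg (pmult n (pmult n (ev n v f) (ev n v (Dn n \<alpha> \<beta> \<gamma> v m' Yp))) (pth (v, dl n v m')))
                   (pmult n (ev n v (f * Dn n \<alpha> \<beta> \<gamma> v m' Yp)) (pth (v, dl n v m')))"
        by (rule cg_mult_right[OF ev_mult[OF v] p1])
      have "cg (pmult n (pmult n (ev n v f) (pth (v, dl n v m))) (pth (t, [a])))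
               (pmult n (ev n v (f * Dn n \<alpha> \<beta> \<gamma> v m' Yp)) (pth (v, dl n v m')))"
        unfolding pmult_assoc pm2 using cg_trans[OF s1 s2[unfolded pmult_assoc]] .
      then show ?thesis using Sp_cg Sp_Dterm by blast
    qed
  qed
qed

lemma Sp_U_arrow: assumes v: "v < n" and t: "t < n" and a: "valid_from n t [a]"
  shows "Sp v (pmult n (pmult n (ev n v f) (pth (v, ul n v m))) (pth (t, [a])))"
proof (cases "t = uv n v m")
  case False
  have "pmult n (pth (v, ul n v m)) (pth (t, [a])) = (\<lambda>_. 0::'k)"
    using False valid_ul[OF v, of m] by (simp add: pth_mult_pth)
  then show ?thesis unfolding pmult_assoc using Sp_0 by (simp add: zero_fun_lam)
next
  case True
  have pm: "pmult n (pmult n (ev n v f) (pth (v, ul n v m))) (pth (t, [a])) = pmult n (ev n v f) (pth (v, ul n v m @ [a]))"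
    unfolding pmult_assoc using True valid_ul[OF v, of m] by (simp add: pth_mult_pth)
  from valid_single[OF a] show ?thesis
  proof
    assume "\<exists>j. a = D j \<and> j < n \<and> minc n j = t"
    then obtain j where j: "a = D j" "j < n" "minc n j = t" by blast
    have jt: "j = mdec n t" using mdec_minc[OF j(2)] j(3) by simp
    show ?thesis
    proof (cases m)
      case 0
      then have "ul n v m @ [a] = dl n v 1" using j(1) jt True by simp
      then show ?thesis unfolding pm by (simp only: Sp_Dterm)
    next
      case (Suc m')
      define e' where "e' = uv n v m'"
      have e': "e' < n" "path_tgt n v (ul n v m') = e'" "valid_from n v (ul n v m')" using valid_ul[OF v, of m'] by (simp_all add: e'_def)
      have "ul n v m @ [a] = ul n v m' @ xw n e'"
        unfolding Suc ul_snoc j(1) jt True uv_Suc' e'_def[symmetric] using e'(1) by (simp add: xw_def)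
      then have pm2: "pmult n (pth (v, ul n v m)) (pth (t, [a])) = pmult n (pth (v, ul n v m')) (ev n e' Xp)"
        using True valid_ul[OF v, of m] e' by (simp add: pth_mult_pth ev_X)
      have p1: "pth (v, ul n v m') \<in> pathalg n" by (rule pathalg_pth_ok[OF v e'(3)])
      have s1: "cg (pmult n (ev n v f) (pmult n (pth (v, ul n v m')) (ev n e' Xp)))
                   (pmult n (ev n v f) (pmult n (ev n v (Up n \<alpha> \<beta> \<gamma> v m' Xp)) (pth (v, ul n v m'))))"
        by (rule cg_mult_left[OF UP[OF v, of m' Xp, folded e'_def] ev_pathalg[OF v]])
      have s2: "cg (pmult n (pmult n (ev n v f) (ev n v (Up n \<alpha> \<beta> \<gamma> v m' Xp))) (pth (v, ul n v m')))
                   (pmult n (ev n v (f * Up n \<alpha> \<beta> \<gamma> v m' Xp)) (pth (v, ul n v m')))"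
        by (rule cg_mult_right[OF ev_mult[OF v] p1])
      have "cg (pmult n (pmult n (ev n v f) (pth (v, ul n v m))) (pth (t, [a])))
               (pmult n (ev n v (f * Up n \<alpha> \<beta> \<gamma> v m' Xp)) (pth (v, ul n v m')))"
        unfolding pmult_assoc pm2 using cg_trans[OF s1 s2[unfolded pmult_assoc]] .
      then show ?thesis using Sp_cg Sp_Uterm by blast
    qed
  next
    assume aU: "a = U t"
    have "ul n v m @ [a] = ul n v (Suc m)" using aU True by (simp only: ul_snoc)
    then show ?thesis unfolding pm by (simp only: Sp_Uterm)
  qed
qed

end

context QH begin

lemma Sp_path: "v < n \<Longrightarrow> valid_from n v cs \<Longrightarrow> Sp v (pth (v, cs))"
proof (induction cs rule: rev_induct)
  case Nil
  have "pth (v, []) = pmult n (ev n v 1) (pth (v, dl n v 0))"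
    by (simp add: ev_1 pth_mult_pth)
  moreover have "Sp v (pmult n (ev n v 1) (pth (v, dl n v 0)))" by (rule Sp_Dterm)
  ultimately show ?case by metis
next
  case (snoc a cs)
  have vc: "valid_from n v cs" and va: "valid_from n (path_tgt n v cs) [a]"
    using snoc.prems(2) by (simp_all add: valid_from_append)
  define t where "t = path_tgt n v cs"
  have t: "t < n" unfolding t_def by (rule tgt_lt[OF snoc.prems(1) vc])
  obtain F G K where FG: "\<forall>m\<ge>K. F m = 0 \<and> G m = 0" "cg (pth (v, cs)) (NF n v F G K)"
    using snoc.IH[OF snoc.prems(1) vc] Sp_def by blast
  have e: "pth (v, cs @ [a]) = pmult n (pth (v, cs)) (pth (t, [a]))"
    by (simp add: pth_mult_pth t_def)
  have pa: "pth (t, [a]) \<in> pathalg n" by (rule pathalg_pth_ok[OF t]) (use va in \<open>simp add: t_def\<close>)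
  have c: "cg (pth (v, cs @ [a])) (pmult n (NF n v F G K) (pth (t, [a])))"
    unfolding e by (rule cg_mult_right[OF FG(2) pa])
  have "Sp v (pmult n (NF n v F G K) (pth (t, [a])))"
    unfolding NF_def pmult_add_left pmult_sum_left
    using va unfolding t_def[symmetric]
    by (intro Sp_add Sp_sum Sp_D_arrow[OF snoc.prems(1) t] Sp_U_arrow[OF snoc.prems(1) t])
  then show ?case using Sp_cg[OF c] by blast
qed

lemma Sp_corner: assumes a: "a \<in> corner n i k" shows "Sp i a"
proof -
  have e: "a = (\<Sum>p\<in>{p. a p \<noteq> 0}. sc (a p) (pth p))"
    by (rule pathalg_expand[of _ n]) (use a in \<open>simp add: corner_def\<close>)
  have "Sp i (\<Sum>p\<in>{p. a p \<noteq> 0}. sc (a p) (pth p))"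
  proof (rule Sp_sum, rule Sp_sc)
    fix p assume "p \<in> {p. a p \<noteq> 0}"
    then have "fst p = i" "valid_from n i (snd p)" "i < n" using corner_props[OF a] by auto
    then show "Sp i (pth p)" using Sp_path by (metis prod.collapse)
  qed
  then show ?thesis using e by simp
qed

lemma fs_NF: "fs (NF n v F G K)"
  unfolding NF_def by (intro fs_add fs_sum fs_pmult fs_ev fs_pth)

lemma test_phidl: "phiw \<alpha> \<beta> \<gamma> (dl n v j) = 1" by (rule phi_dl)

lemma Phi_NF: assumes v: "v < n"
  shows "PH (NF n v F G K) v M = (\<Sum>m<K. if int m = M then F m else 0) + (\<Sum>m<K. if - int m = M then G m * ph (ul n v m) else 0)"
proof -
  have h1: "PH (pmult n (ev n v (F m)) (pth (v, dl n v m))) v M = (if int m = M then F m else 0)" for m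
  proof -
    have "PH (pmult n (ev n v (F m)) (pth (v, dl n v m))) v M = (if v = v \<and> degw (dl n v m) = M then F m * ph (dl n v m) else 0)"
      by (rule Phi_ev_path[OF v]) (use valid_dl[OF v] in simp)
    then show ?thesis unfolding test_phidl by simp
  qed
  have h2: "PH (pmult n (ev n v (G m)) (pth (v, ul n v m))) v M = (if - int m = M then G m * ph (ul n v m) else 0)" for m
  proof -
    have "PH (pmult n (ev n v (G m)) (pth (v, ul n v m))) v M = (if v = v \<and> degw (ul n v m) = M then G m * ph (ul n v m) else 0)"
      by (rule Phi_ev_path[OF v]) (use valid_ul[OF v] in simp)
    then show ?thesis by simp
  qed
  show ?thesis
    unfolding NF_def
    apply (subst Phi_add, (intro fs_sum fs_pmult fs_ev fs_pth)+)
    apply (subst (1 2) Phi_sum, (intro fs_pmult fs_ev fs_pth)+)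
    unfolding h1 h2 ..
qed

lemma NF_zero: assumes v: "v < n" and z: "\<And>M. PH (NF n v F G K) v M = 0"
  shows "NF n v F G K = 0"
proof -
  have F: "F m = 0" if "m < K" "m > 0" for m
  proof -
    have "PH (NF n v F G K) v (int m) = F m"
      unfolding Phi_NF[OF v] using that
      by (subst sum_single[of _ m], simp, simp)+ simp
    then show ?thesis using z by simp
  qed
  have G: "G m = 0" if "m < K" "m > 0" for m
  proof -
    have "PH (NF n v F G K) v (- int m) = G m * ph (ul n v m)"
      unfolding Phi_NF[OF v] using that
      by (subst sum_single[of _ m], simp, simp)+ simp
    then show ?thesis using z phi_ul[OF v] by simp
  qed
  show ?thesis
  proof (cases "K = 0")
    case True then show ?thesis by (simp add: NF_def)
  next
    case False
    have FG0: "F 0 + G 0 = 0"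
    proof -
      have "PH (NF n v F G K) v 0 = F 0 + G 0"
        unfolding Phi_NF[OF v] using False
        by (subst sum_single[of _ 0], simp, simp)+ simp
      then show ?thesis using z by simp
    qed
    have "NF n v F G K = pmult n (ev n v (F 0)) (pth (v, [])) + pmult n (ev n v (G 0)) (pth (v, []))"
      unfolding NF_def using False F G
      by (subst sum_single[of _ 0], simp, force)+ simp
    also have "\<dots> = ev n v (F 0 + G 0)" by (simp add: pth_unit_right[OF v] ev_add)
    finally show ?thesis using FG0 by simp
  qed
qed

lemma nonzero_Phi: assumes a: "a \<in> corner n i k" and i: "i < n" and na: "a \<notin> relideal n \<alpha> \<beta> \<gamma>"
  shows "\<exists>M. PH a i M \<noteq> 0"
proof (rule ccontr)
  assume "\<not> (\<exists>M. PH a i M \<noteq> 0)"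
  then have z: "PH a i M = 0" for M by simp
  obtain F G K where FG: "cg a (NF n i F G K)" using Sp_corner[OF a] Sp_def by blast
  have "PH (NF n i F G K) i M = 0" for M
  proof -
    have "PH (a - NF n i F G K) i M = 0" by (rule Phi_I[OF FG])
    then show ?thesis using z Phi_diff[OF corner_fs[OF a] fs_NF] by simp
  qed
  then have "NF n i F G K = 0" by (rule NF_zero[OF i])
  then show False using FG na by simp
qed

theorem QH_pd: "piecewise_domain_H n \<alpha> \<beta> \<gamma>"
  unfolding piecewise_domain_H_def
proof (intro allI impI ballI)
  fix i k j a b
  assume i: "i < n" and k: "k < n" and j: "j < n" and a: "a \<in> corner n i k" and b: "b \<in> corner n k j"
    and ab: "pmult n a b \<in> relideal n \<alpha> \<beta> \<gamma>"
  show "a \<in> relideal n \<alpha> \<beta> \<gamma> \<or> b \<in> relideal n \<alpha> \<beta> \<gamma>"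
  proof (rule ccontr)
    assume "\<not> ?thesis"
    then have na: "a \<notin> relideal n \<alpha> \<beta> \<gamma>" and nb: "b \<notin> relideal n \<alpha> \<beta> \<gamma>" by auto
    obtain ma where ma: "PH a i ma \<noteq> 0" using nonzero_Phi[OF a i na] by blast
    obtain mb where mb: "PH b k mb \<noteq> 0" using nonzero_Phi[OF b k nb] by blast
    obtain M where "PH (pmult n a b) i M \<noteq> 0" using Phi_domain[OF a b ma mb] by blast
    then show False using Phi_I[OF ab] by simp
  qed
qed

end

theorem corollary2p4:
  fixes n :: nat and \<alpha> \<beta> \<gamma> :: "nat \<Rightarrow> 'k::field_char_0"
  assumes alg_closed: "\<forall>p :: 'k poly. degree p \<noteq> 0 \<longrightarrow> (\<exists>x. poly p x = 0)"
    and n: "n \<ge> 1"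
    and beta: "\<forall>i<n. \<beta> i \<noteq> 0"
  shows "piecewise_domain_H n \<alpha> \<beta> \<gamma>"
proof -
  interpret QH n \<alpha> \<beta> \<gamma> using n beta by unfold_locales auto
  show ?thesis by (rule QH_pd)
qed

end
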